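(* Let $R$ be a right semiartinian ring that is not completely reducible, and let $M$ be a finitely generated weakly $R$-projective right $R$-module. Then $M$ is projective.
   Context: All modules are right $R$-modules. For a right semiartinian ring $R$, the right socle sequence $(S_\alpha \mid \alpha \leq \sigma+1)$ is defined by $S_0 = 0$, $S_{\alpha+1}/S_\alpha = \mathrm{Soc}(R/S_\alpha)$, $S_\alpha = \bigcup_{\beta<\alpha} S_\beta$ for limit $\alpha$, with $\sigma+1$ the least ordinal such that $S_{\sigma+1} = R$ (the Loewy length); it is assumed that $\sigma > 0$ (i.e. $R$ is not completely reducible). For $\alpha \leq \sigma$, the $\alpha$th layer is $L_\alpha = S_{\alpha+1}/S_\alpha$ and the $\alpha$th layer epimorphism is the canonical projection $\pi_\alpha : S_{\alpha+1} \to L_\alpha$. A module $M$ is weakly $R$-projective if for each $0 < \alpha \leq \sigma$, each $f \in \mathrm{Hom}_R(M, L_\alpha)$ with finitely generated image factors through $\pi_\alpha$, i.e. $f = \pi_\alpha g$ for some $g \in \mathrm{Hom}_R(M, S_{\alpha+1})$. *)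

theory Defs
  imports "HOL-Algebra.Algebra"
begin

text \<open>A right R-module is represented by a record of type ('a,'b) module
  (carrier and additive structure of M); the field smult is read as the
  right action: x * r is written ract M x r = smult M r x.  The
  multiplicative fields mult/one of the record are ignored.\<close>

definition ract :: "('a, 'b) module \<Rightarrow> 'b \<Rightarrow> 'a \<Rightarrow> 'b" where
  "ract M x r = smult M r x"

definition right_module :: "'a ring \<Rightarrow> ('a, 'b) module \<Rightarrow> bool" where
  "right_module R M \<longleftrightarrow> ring R \<and> abelian_group M \<and>
     (\<forall>x\<in>carrier M. \<forall>r\<in>carrier R. ract M x r \<in> carrier M) \<and>
     (\<forall>x\<in>carrier M. \<forall>y\<in>carrier M. \<forall>r\<in>carrier R.
        ract M (x \<oplus>\<^bsub>M\<^esub> y) r = ract M x r \<oplus>\<^bsub>M\<^esub> ract M y r) \<and>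
     (\<forall>x\<in>carrier M. \<forall>r\<in>carrier R. \<forall>s\<in>carrier R.
        ract M x (r \<oplus>\<^bsub>R\<^esub> s) = ract M x r \<oplus>\<^bsub>M\<^esub> ract M x s) \<and>
     (\<forall>x\<in>carrier M. \<forall>r\<in>carrier R. \<forall>s\<in>carrier R.
        ract M x (r \<otimes>\<^bsub>R\<^esub> s) = ract M (ract M x r) s) \<and>
     (\<forall>x\<in>carrier M. ract M x \<one>\<^bsub>R\<^esub> = x)"

definition rsubmodule :: "'a ring \<Rightarrow> ('a, 'b) module \<Rightarrow> 'b set \<Rightarrow> bool" where
  "rsubmodule R M U \<longleftrightarrow> U \<subseteq> carrier M \<and> \<zero>\<^bsub>M\<^esub> \<in> U \<and>
     (\<forall>x\<in>U. \<forall>y\<in>U. x \<oplus>\<^bsub>M\<^esub> y \<in> U) \<and>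
     (\<forall>x\<in>U. \<ominus>\<^bsub>M\<^esub> x \<in> U) \<and>
     (\<forall>x\<in>U. \<forall>r\<in>carrier R. ract M x r \<in> U)"

definition rhom :: "'a ring \<Rightarrow> ('a, 'b) module \<Rightarrow> ('a, 'c) module \<Rightarrow> ('b \<Rightarrow> 'c) \<Rightarrow> bool" where
  "rhom R M N f \<longleftrightarrow> f \<in> carrier M \<rightarrow> carrier N \<and>
     (\<forall>x\<in>carrier M. \<forall>y\<in>carrier M. f (x \<oplus>\<^bsub>M\<^esub> y) = f x \<oplus>\<^bsub>N\<^esub> f y) \<and>
     (\<forall>x\<in>carrier M. \<forall>r\<in>carrier R. f (ract M x r) = ract N (f x) r)"

definition submod :: "('a, 'b) module \<Rightarrow> 'b set \<Rightarrow> ('a, 'b) module" where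
  "submod M U = M\<lparr>carrier := U\<rparr>"

definition quot_mod :: "('a, 'b) module \<Rightarrow> 'b set \<Rightarrow> ('a, 'b set) module" where
  "quot_mod M U =
     \<lparr>carrier = A_RCOSETS M U, monoid.mult = (\<lambda>A B. A), one = U, ring.zero = U,
      ring.add = set_add M,
      smult = (\<lambda>s A. set_add M ((\<lambda>x. ract M x s) ` A) U)\<rparr>"

definition fin_gen :: "'a ring \<Rightarrow> ('a, 'b) module \<Rightarrow> bool" where
  "fin_gen R M \<longleftrightarrow> (\<exists>A. finite A \<and> A \<subseteq> carrier M \<and>
     (\<forall>x\<in>carrier M. \<exists>c \<in> A \<rightarrow> carrier R. x = finsum M (\<lambda>a. ract M a (c a)) A))"

definition rsimple_sub :: "'a ring \<Rightarrow> ('a, 'b) module \<Rightarrow> 'b set \<Rightarrow> bool" where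
  "rsimple_sub R M U \<longleftrightarrow> rsubmodule R M U \<and> U \<noteq> {\<zero>\<^bsub>M\<^esub>} \<and>
     (\<forall>V. rsubmodule R M V \<and> V \<subseteq> U \<longrightarrow> V = {\<zero>\<^bsub>M\<^esub>} \<or> V = U)"

definition rsocle :: "'a ring \<Rightarrow> ('a, 'b) module \<Rightarrow> 'b set" where
  "rsocle R M = \<Inter>{V. rsubmodule R M V \<and> (\<forall>U. rsimple_sub R M U \<longrightarrow> U \<subseteq> V)}"

definition RR :: "'a ring \<Rightarrow> ('a, 'a) module" where
  "RR R = \<lparr>carrier = carrier R, monoid.mult = monoid.mult R, one = one R, ring.zero = ring.zero R,
           ring.add = ring.add R, smult = (\<lambda>r x. x \<otimes>\<^bsub>R\<^esub> r)\<rparr>"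

definition right_ideal :: "'a ring \<Rightarrow> 'a set \<Rightarrow> bool" where
  "right_ideal R I \<longleftrightarrow> rsubmodule R (RR R) I"

definition completely_reducible :: "'a ring \<Rightarrow> bool" where
  "completely_reducible R \<longleftrightarrow> rsocle R (RR R) = carrier R"

definition right_semiartinian :: "'a ring \<Rightarrow> bool" where
  "right_semiartinian R \<longleftrightarrow> ring R \<and>
     (\<forall>I. right_ideal R I \<and> I \<noteq> carrier R \<longrightarrow>
        rsocle R (quot_mod (RR R) I) \<noteq> {\<zero>\<^bsub>quot_mod (RR R) I\<^esub>})"

definition next_socle :: "'a ring \<Rightarrow> 'a set \<Rightarrow> 'a set" where
  "next_socle R I = {x \<in> carrier R. I +>\<^bsub>RR R\<^esub> x \<in> rsocle R (quot_mod (RR R) I)}"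

text \<open>The set of all members S_alpha of the right socle sequence: it is the
  least family containing S_0 = 0, closed under the successor step and under
  unions (limit steps).\<close>
inductive_set socle_seq :: "'a ring \<Rightarrow> 'a set set" for R :: "'a ring" where
  zero: "{\<zero>\<^bsub>R\<^esub>} \<in> socle_seq R"
| succ: "I \<in> socle_seq R \<Longrightarrow> next_socle R I \<in> socle_seq R"
| lim: "C \<noteq> {} \<Longrightarrow> \<forall>I\<in>C. I \<in> socle_seq R \<Longrightarrow> \<Union>C \<in> socle_seq R"

text \<open>The layer L_alpha = S_(alpha+1) / S_alpha for S_alpha = I.\<close>
definition layer :: "'a ring \<Rightarrow> 'a set \<Rightarrow> ('a, 'a set) module" where
  "layer R I = quot_mod (submod (RR R) (next_socle R I)) I"

text \<open>Weakly R-projective: for 0 < alpha \<le> sigma (i.e. S_alpha \<noteq> 0 and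
  S_alpha \<noteq> R), every f : M \<rightarrow> L_alpha with finitely generated image factors
  through pi_alpha : S_(alpha+1) \<rightarrow> L_alpha, pi_alpha(y) = S_alpha +> y.\<close>
definition weakly_projective :: "'a ring \<Rightarrow> ('a, 'b) module \<Rightarrow> bool" where
  "weakly_projective R M \<longleftrightarrow>
     (\<forall>I\<in>socle_seq R. I \<noteq> {\<zero>\<^bsub>R\<^esub>} \<longrightarrow> I \<noteq> carrier R \<longrightarrow>
        (\<forall>f. rhom R M (layer R I) f \<and> fin_gen R (submod (layer R I) (f ` carrier M)) \<longrightarrow>
           (\<exists>g. rhom R M (submod (RR R) (next_socle R I)) g \<and>
                (\<forall>x\<in>carrier M. f x = I +>\<^bsub>RR R\<^esub> g x))))"

text \<open>Projectivity relative to all right modules whose carriers live in the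
  types 'd and 'e; a theorem with free 'd, 'e quantifies over all of them,
  hence over all right modules up to isomorphism.\<close>
definition rprojective :: "'a ring \<Rightarrow> ('a, 'b) module \<Rightarrow> 'd itself \<Rightarrow> 'e itself \<Rightarrow> bool" where
  "rprojective R M _ _ \<longleftrightarrow>
     (\<forall>(N :: ('a, 'd) module) (N' :: ('a, 'e) module) p f.
        right_module R N \<and> right_module R N' \<and> rhom R N N' p \<and> p ` carrier N = carrier N' \<and>
        rhom R M N' f \<longrightarrow>
        (\<exists>g. rhom R M N g \<and> (\<forall>x\<in>carrier M. p (g x) = f x)))"

end

theory Submission
  imports Defs
begin


definition rid :: "'a ring \<Rightarrow> 'a set \<Rightarrow> bool" where
  "rid R I \<longleftrightarrow> I \<subseteq> carrier R \<and> \<zero>\<^bsub>R\<^esub> \<in> I \<and> (\<forall>x\<in>I. \<forall>y\<in>I. x \<oplus>\<^bsub>R\<^esub> y \<in> I) \<and>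
     (\<forall>x\<in>I. \<ominus>\<^bsub>R\<^esub> x \<in> I) \<and> (\<forall>x\<in>I. \<forall>r\<in>carrier R. x \<otimes>\<^bsub>R\<^esub> r \<in> I)"

definition ssum :: "'a ring \<Rightarrow> 'a set \<Rightarrow> 'a set \<Rightarrow> 'a set" where
  "ssum R A B = {z. \<exists>a\<in>A. \<exists>b\<in>B. z = a \<oplus>\<^bsub>R\<^esub> b}"

lemma RR_simps[simp]: "carrier (RR R) = carrier R" "ring.add (RR R) = ring.add R" "ring.zero (RR R) = ring.zero R"
  by (simp_all add: RR_def)
lemma ract_RR[simp]: "ract (RR R) x r = x \<otimes>\<^bsub>R\<^esub> r" by (simp add: ract_def RR_def)
lemma a_inv_RR[simp]: "a_inv (RR R) = a_inv R" by (rule ext) (simp add: a_inv_def m_inv_def RR_def)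

lemma submod_simps[simp]: "carrier (submod M U) = U" "ring.add (submod M U) = ring.add M" "ring.zero (submod M U) = ring.zero M"
   "ract (submod M U) = ract M"
  by (simp_all add: submod_def ract_def[abs_def])

lemma a_r_coset_cong: "ring.add G = ring.add H \<Longrightarrow> a_r_coset G = a_r_coset H"
  by (intro ext) (simp add: a_r_coset_def r_coset_def)
lemma set_add_cong: "ring.add G = ring.add H \<Longrightarrow> set_add G = set_add H"
  by (intro ext) (simp add: set_add_def set_mult_def)
lemma A_RCOSETS_eq: "A_RCOSETS G S = (\<lambda>x. a_r_coset G S x) ` carrier G"
  by (auto simp: A_RCOSETS_def RCOSETS_def a_r_coset_def)

lemma a_r_coset_RR[simp]: "a_r_coset (RR R) = a_r_coset R" by (rule a_r_coset_cong) simp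
lemma set_add_RR[simp]: "set_add (RR R) = set_add R" by (rule set_add_cong) simp
lemma a_r_coset_submod[simp]: "a_r_coset (submod M U) = a_r_coset M" by (rule a_r_coset_cong) simp
lemma set_add_submod[simp]: "set_add (submod M U) = set_add M" by (rule set_add_cong) simp

lemma quot_simps[simp]: "carrier (quot_mod M U) = (\<lambda>x. a_r_coset M U x) ` carrier M"
  "ring.add (quot_mod M U) = set_add M" "ring.zero (quot_mod M U) = U"
  "ract (quot_mod M U) A s = set_add M ((\<lambda>x. ract M x s) ` A) U"
  by (simp_all add: quot_mod_def ract_def A_RCOSETS_eq)

lemma rsubD: assumes "rsubmodule R N V"
  shows "V \<subseteq> carrier N" "\<zero>\<^bsub>N\<^esub> \<in> V" "x \<in> V \<Longrightarrow> y \<in> V \<Longrightarrow> x \<oplus>\<^bsub>N\<^esub> y \<in> V"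
    "x \<in> V \<Longrightarrow> \<ominus>\<^bsub>N\<^esub> x \<in> V" "x \<in> V \<Longrightarrow> r \<in> carrier R \<Longrightarrow> ract N x r \<in> V"
  using assms by (simp_all add: rsubmodule_def)

lemma Inter_sub: assumes "F \<noteq> {}" "\<forall>V\<in>F. rsubmodule R N V"
  shows "rsubmodule R N (\<Inter>F)"
proof -
  obtain V0 where V0: "V0 \<in> F" using assms(1) by blast
  show ?thesis unfolding rsubmodule_def
  proof (intro conjI ballI InterI)
    show "\<Inter>F \<subseteq> carrier N" using rsubD(1)[of R N V0] assms(2) V0 by blast
  next
    fix V assume "V \<in> F" then show "\<zero>\<^bsub>N\<^esub> \<in> V" using assms(2) rsubD(2) by blast
  next
    fix x y V assume "x \<in> \<Inter>F" "y \<in> \<Inter>F" "V \<in> F"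
    then have "x \<in> V" "y \<in> V" by auto
    then show "x \<oplus>\<^bsub>N\<^esub> y \<in> V" using assms(2) \<open>V \<in> F\<close> rsubD(3)[of R N V] by blast
  next
    fix x V assume "x \<in> \<Inter>F" "V \<in> F"
    then have "x \<in> V" by auto
    then show "\<ominus>\<^bsub>N\<^esub> x \<in> V" using assms(2) \<open>V \<in> F\<close> rsubD(4)[of R N V] by blast
  next
    fix x r V assume "x \<in> \<Inter>F" "r \<in> carrier R" "V \<in> F"
    then have "x \<in> V" by auto
    then show "ract N x r \<in> V" using assms(2) \<open>V \<in> F\<close> \<open>r \<in> carrier R\<close> rsubD(5)[of R N V] by blast
  qed
qed
locale rring = ring R for R :: "'a ring" (structure)

context rring begin

lemma rid_sub: "rid R I \<Longrightarrow> additive_subgroup I R"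
  apply (rule additive_subgroupI)
  apply (rule add.subgroupI)
  apply (auto simp: rid_def a_inv_def)
  done

lemma rid_asub: "rid R I \<Longrightarrow> abelian_subgroup I R"
  by (blast intro: abelian_subgroupI3 rid_sub is_abelian_group)

lemma ridD: assumes "rid R I"
  shows "I \<subseteq> carrier R" "\<zero> \<in> I" "x \<in> I \<Longrightarrow> y \<in> I \<Longrightarrow> x \<oplus> y \<in> I"
    "x \<in> I \<Longrightarrow> \<ominus> x \<in> I" "x \<in> I \<Longrightarrow> r \<in> carrier R \<Longrightarrow> x \<otimes> r \<in> I"
    "x \<in> I \<Longrightarrow> y \<in> I \<Longrightarrow> x \<ominus> y \<in> I"
  using assms unfolding rid_def by (auto simp: minus_eq)

lemma rid_carr: "rid R I \<Longrightarrow> x \<in> I \<Longrightarrow> x \<in> carrier R"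
  using ridD(1) by blast

lemma right_ideal_rid: "right_ideal R I \<longleftrightarrow> rid R I"
  by (simp add: right_ideal_def rsubmodule_def rid_def)

lemma rid_carrier: "rid R (carrier R)"
  by (simp add: rid_def)

lemma rid_zero: "rid R {\<zero>}"
  by (simp add: rid_def)

lemma rid_Int: "rid R A \<Longrightarrow> rid R B \<Longrightarrow> rid R (A \<inter> B)"
  by (simp add: rid_def) blast

lemma ssum_rid: assumes "rid R A" "rid R B" shows "rid R (ssum R A B)"
proof -
  have cA: "\<And>x. x \<in> A \<Longrightarrow> x \<in> carrier R" and cB: "\<And>x. x \<in> B \<Longrightarrow> x \<in> carrier R"
    using assms rid_carr by blast+
  show ?thesis unfolding rid_def ssum_def
  proof (intro conjI ballI subsetI)
    fix x assume "x \<in> {z. \<exists>a\<in>A. \<exists>b\<in>B. z = a \<oplus> b}"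
    then show "x \<in> carrier R" using cA cB by auto
  next
    show "\<zero> \<in> {z. \<exists>a\<in>A. \<exists>b\<in>B. z = a \<oplus> b}" using ridD(2)[OF assms(1)] ridD(2)[OF assms(2)] by force
  next
    fix x y assume "x \<in> {z. \<exists>a\<in>A. \<exists>b\<in>B. z = a \<oplus> b}" "y \<in> {z. \<exists>a\<in>A. \<exists>b\<in>B. z = a \<oplus> b}"
    then obtain a b a' b' where ab: "a \<in> A" "b \<in> B" "a' \<in> A" "b' \<in> B" "x = a \<oplus> b" "y = a' \<oplus> b'" by blast
    then have "x \<oplus> y = (a \<oplus> a') \<oplus> (b \<oplus> b')" using cA cB by (simp add: a_ac)
    then show "x \<oplus> y \<in> {z. \<exists>a\<in>A. \<exists>b\<in>B. z = a \<oplus> b}" using ab ridD(3)[OF assms(1)] ridD(3)[OF assms(2)] by blast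
  next
    fix x assume "x \<in> {z. \<exists>a\<in>A. \<exists>b\<in>B. z = a \<oplus> b}"
    then obtain a b where ab: "a \<in> A" "b \<in> B" "x = a \<oplus> b" by blast
    then have "\<ominus> x = \<ominus> a \<oplus> \<ominus> b" using cA cB by (simp add: minus_add)
    then show "\<ominus> x \<in> {z. \<exists>a\<in>A. \<exists>b\<in>B. z = a \<oplus> b}" using ab ridD(4)[OF assms(1)] ridD(4)[OF assms(2)] by blast
  next
    fix x r assume "x \<in> {z. \<exists>a\<in>A. \<exists>b\<in>B. z = a \<oplus> b}" and r: "r \<in> carrier R"
    then obtain a b where ab: "a \<in> A" "b \<in> B" "x = a \<oplus> b" by blast
    then have "x \<otimes> r = a \<otimes> r \<oplus> b \<otimes> r" using cA cB r by (simp add: l_distr)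
    then show "x \<otimes> r \<in> {z. \<exists>a\<in>A. \<exists>b\<in>B. z = a \<oplus> b}" using ab r ridD(5)[OF assms(1)] ridD(5)[OF assms(2)] by blast
  qed
qed

lemma ssum_left: "rid R B \<Longrightarrow> A \<subseteq> carrier R \<Longrightarrow> A \<subseteq> ssum R A B"
  unfolding ssum_def using ridD(2) by force

lemma ssum_right: "rid R A \<Longrightarrow> B \<subseteq> carrier R \<Longrightarrow> B \<subseteq> ssum R A B"
  unfolding ssum_def using ridD(2) by force

lemma rid_Union_chain:
  assumes "C \<noteq> {}" "\<forall>I\<in>C. rid R I" "\<forall>I\<in>C. \<forall>J\<in>C. I \<subseteq> J \<or> J \<subseteq> I"
  shows "rid R (\<Union>C)"
proof -
  obtain I0 where "I0 \<in> C" using assms(1) by blast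
  show ?thesis unfolding rid_def
  proof (intro conjI ballI subsetI)
    show "\<zero> \<in> \<Union>C" using \<open>I0 \<in> C\<close> assms(2) ridD(2) by blast
  next
    fix x assume "x \<in> \<Union>C" then show "x \<in> carrier R" using assms(2) rid_carr by blast
  next
    fix x y assume "x \<in> \<Union>C" "y \<in> \<Union>C"
    then obtain I J where "I \<in> C" "J \<in> C" "x \<in> I" "y \<in> J" by blast
    then show "x \<oplus> y \<in> \<Union>C" using assms(2,3) ridD(3) by (metis UnionI subsetD)
  next
    fix x assume "x \<in> \<Union>C" then show "\<ominus> x \<in> \<Union>C" using assms(2) ridD(4) by blast
  next
    fix x r assume "x \<in> \<Union>C" "r \<in> carrier R" then show "x \<otimes> r \<in> \<Union>C" using assms(2) ridD(5) by blast
  qed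
qed

lemma cos_eq: assumes "rid R S" "x \<in> carrier R" "y \<in> carrier R"
  shows "S +> x = S +> y \<longleftrightarrow> x \<ominus> y \<in> S"
proof -
  interpret abelian_subgroup S R using rid_asub[OF assms(1)] .
  show ?thesis
  proof
    assume "S +> x = S +> y"
    then have "x \<in> S +> y" using a_rcos_self[OF assms(2)] by simp
    then show "x \<ominus> y \<in> S" using a_rcos_module_minus[OF ring_axioms assms(3,2)] by simp
  next
    assume "x \<ominus> y \<in> S"
    then have "x \<in> S +> y" using a_rcos_module_minus[OF ring_axioms assms(3,2)] by simp
    then show "S +> x = S +> y" using a_repr_independence'[OF _ assms(3)] by simp
  qed
qed

lemma cos_zero: assumes "rid R S" "x \<in> carrier R"
  shows "S +> x = S \<longleftrightarrow> x \<in> S"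
proof -
  interpret abelian_subgroup S R using rid_asub[OF assms(1)] .
  have "S = S +> \<zero>" using a_subset by simp
  then have "S +> x = S \<longleftrightarrow> S +> x = S +> \<zero>" by simp
  also have "\<dots> \<longleftrightarrow> x \<ominus> \<zero> \<in> S" using cos_eq assms by simp
  finally show ?thesis using assms(2) by (simp add: minus_eq)
qed

lemma cos_self: "rid R S \<Longrightarrow> S +> \<zero> = S"
  using cos_zero ridD(2) by simp

lemma cos_add: assumes "rid R S" "x \<in> carrier R" "y \<in> carrier R"
  shows "set_add R (S +> x) (S +> y) = S +> (x \<oplus> y)"
proof -
  interpret abelian_subgroup S R using rid_asub[OF assms(1)] .
  show ?thesis using a_rcos_sum assms by simp
qed

lemma cos_mult: assumes "rid R S" "x \<in> carrier R" "r \<in> carrier R"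
  shows "set_add R ((\<lambda>z. z \<otimes> r) ` (S +> x)) S = S +> (x \<otimes> r)"
proof -
  have cS: "\<And>s. s \<in> S \<Longrightarrow> s \<in> carrier R" using assms(1) rid_carr by blast
  show ?thesis
  proof (rule Set.set_eqI)
    fix z
    show "z \<in> set_add R ((\<lambda>z. z \<otimes> r) ` (S +> x)) S \<longleftrightarrow> z \<in> S +> (x \<otimes> r)"
    proof
      assume "z \<in> set_add R ((\<lambda>z. z \<otimes> r) ` (S +> x)) S"
      then obtain a s' where a: "a \<in> (\<lambda>z. z \<otimes> r) ` (S +> x)" "s' \<in> S" "z = a \<oplus> s'"
        unfolding set_add_def' by blast
      then obtain s where s: "s \<in> S" "a = (s \<oplus> x) \<otimes> r"
        unfolding a_r_coset_def' by blast
      have "z = (s \<otimes> r \<oplus> s') \<oplus> x \<otimes> r"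
      proof -
        have c: "s \<in> carrier R" "s' \<in> carrier R" using a s cS by auto
        have "z = (s \<otimes> r \<oplus> x \<otimes> r) \<oplus> s'" using a s c assms by (simp add: l_distr)
        also have "\<dots> = (s \<otimes> r \<oplus> s') \<oplus> x \<otimes> r" using c assms
          by (simp add: a_ac)
        finally show ?thesis .
      qed
      moreover have "s \<otimes> r \<oplus> s' \<in> S" using ridD(3)[OF assms(1) ridD(5)[OF assms(1) s(1) assms(3)] a(2)] .
      ultimately show "z \<in> S +> (x \<otimes> r)" unfolding a_r_coset_def' by blast
    next
      assume "z \<in> S +> (x \<otimes> r)"
      then obtain s where ss: "s \<in> S" "z = s \<oplus> x \<otimes> r" unfolding a_r_coset_def' by blast
      have "s \<in> carrier R" using ss cS by auto
      then have "z = (\<zero> \<oplus> x) \<otimes> r \<oplus> s" using ss assms by (simp add: a_comm)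
      moreover have "\<zero> \<oplus> x \<in> S +> x" using ridD(2)[OF assms(1)] unfolding a_r_coset_def' by blast
      ultimately show "z \<in> set_add R ((\<lambda>z. z \<otimes> r) ` (S +> x)) S" using ss(1)
        unfolding set_add_def' by blast
    qed
  qed
qed

abbreviation Q where "Q S \<equiv> quot_mod (RR R) S"

lemma Q_inv: assumes "rid R S" "x \<in> carrier R"
  shows "a_inv (Q S) (S +> x) = S +> (\<ominus> x)"
proof -
  have "a_inv (Q S) (S +> x) = (THE y. y \<in> carrier (Q S) \<and> set_add R (S +> x) y = S \<and> set_add R y (S +> x) = S)"
    by (simp add: a_inv_def m_inv_def)
  also have "\<dots> = S +> (\<ominus> x)"
  proof (rule the_equality)
    show "S +> \<ominus> x \<in> carrier (Q S) \<and> set_add R (S +> x) (S +> \<ominus> x) = S \<and> set_add R (S +> \<ominus> x) (S +> x) = S"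
      using assms by (simp add: cos_add cos_self r_neg l_neg)
  next
    fix y assume y: "y \<in> carrier (Q S) \<and> set_add R (S +> x) y = S \<and> set_add R y (S +> x) = S"
    then obtain z where z: "z \<in> carrier R" "y = S +> z" by auto
    then have "S +> (x \<oplus> z) = S" using y assms by (simp add: cos_add)
    then have "x \<oplus> z \<in> S" using cos_zero assms z by simp
    moreover have "z \<ominus> \<ominus> x = x \<oplus> z" using z assms by (simp add: minus_eq a_ac)
    ultimately show "y = S +> \<ominus> x" using cos_eq assms z by simp
  qed
  finally show ?thesis .
qed

lemma Q_ract: "rid R S \<Longrightarrow> x \<in> carrier R \<Longrightarrow> r \<in> carrier R \<Longrightarrow> ract (Q S) (S +> x) r = S +> (x \<otimes> r)"
  using cos_mult by simp

lemma img_sub: assumes "rid R S" "rid R W"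
  shows "rsubmodule R (Q S) ((\<lambda>w. S +> w) ` W)"
  unfolding rsubmodule_def
proof (intro conjI ballI)
  have cW: "\<And>w. w \<in> W \<Longrightarrow> w \<in> carrier R" using assms(2) rid_carr by blast
  show "(\<lambda>w. S +> w) ` W \<subseteq> carrier (Q S)" using cW by auto
  show "\<zero>\<^bsub>Q S\<^esub> \<in> (\<lambda>w. S +> w) ` W" using cos_self[OF assms(1)] ridD(2)[OF assms(2)] by force
  fix A assume "A \<in> (\<lambda>w. S +> w) ` W"
  then obtain w where w: "w \<in> W" "A = S +> w" by blast
  { fix B assume "B \<in> (\<lambda>w. S +> w) ` W"
    then obtain v where v: "v \<in> W" "B = S +> v" by blast
    show "A \<oplus>\<^bsub>Q S\<^esub> B \<in> (\<lambda>w. S +> w) ` W" using w v cW assms cos_add ridD(3)[OF assms(2)] by auto }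
  show "\<ominus>\<^bsub>Q S\<^esub> A \<in> (\<lambda>w. S +> w) ` W" using w Q_inv[OF assms(1) cW[OF w(1)]] ridD(4)[OF assms(2)] by auto
  fix r assume "r \<in> carrier R"
  then show "ract (Q S) A r \<in> (\<lambda>w. S +> w) ` W"
    using w Q_ract[OF assms(1) cW[OF w(1)]] ridD(5)[OF assms(2)] by auto
qed

lemma Q_carrier_sub: "rid R S \<Longrightarrow> rsubmodule R (Q S) (carrier (Q S))"
  using img_sub[OF _ rid_carrier] by simp

lemma pre_rid: assumes "rid R S" "rsubmodule R (Q S) V"
  shows "rid R {w \<in> carrier R. S +> w \<in> V}" "S \<subseteq> {w \<in> carrier R. S +> w \<in> V}"
proof -
  have V: "\<zero>\<^bsub>Q S\<^esub> \<in> V" "\<And>A B. A \<in> V \<Longrightarrow> B \<in> V \<Longrightarrow> A \<oplus>\<^bsub>Q S\<^esub> B \<in> V"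
    "\<And>A. A \<in> V \<Longrightarrow> \<ominus>\<^bsub>Q S\<^esub> A \<in> V" "\<And>A r. A \<in> V \<Longrightarrow> r \<in> carrier R \<Longrightarrow> ract (Q S) A r \<in> V"
    using assms(2) unfolding rsubmodule_def by blast+
  show "rid R {w \<in> carrier R. S +> w \<in> V}" unfolding rid_def
  proof (intro conjI ballI)
    show "\<zero> \<in> {w \<in> carrier R. S +> w \<in> V}" using V(1) cos_self[OF assms(1)] by simp
    fix x assume x: "x \<in> {w \<in> carrier R. S +> w \<in> V}"
    { fix y assume y: "y \<in> {w \<in> carrier R. S +> w \<in> V}"
      show "x \<oplus> y \<in> {w \<in> carrier R. S +> w \<in> V}" using V(2)[of "S +> x" "S +> y"] x y cos_add[OF assms(1)] by simp }
    show "\<ominus> x \<in> {w \<in> carrier R. S +> w \<in> V}" using V(3)[of "S +> x"] x Q_inv[OF assms(1)] by simp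
    fix r assume "r \<in> carrier R"
    then show "x \<otimes> r \<in> {w \<in> carrier R. S +> w \<in> V}" using V(4)[of "S +> x" r] x Q_ract[OF assms(1)] by simp
  qed auto
  show "S \<subseteq> {w \<in> carrier R. S +> w \<in> V}"
  proof
    fix x assume "x \<in> S"
    then have "S +> x = S" using cos_zero[OF assms(1)] rid_carr[OF assms(1)] by blast
    then show "x \<in> {w \<in> carrier R. S +> w \<in> V}" using V(1) \<open>x \<in> S\<close> rid_carr[OF assms(1)] by simp
  qed
qed

lemma simple_sub_carrier: "rsimple_sub R N U \<Longrightarrow> U \<subseteq> carrier N"
  by (simp add: rsimple_sub_def rsubmodule_def)

lemma soc_props: assumes "rid R S"
  shows "rsubmodule R (Q S) (rsocle R (Q S))" "rsocle R (Q S) \<subseteq> carrier (Q S)"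
    "\<And>U. rsimple_sub R (Q S) U \<Longrightarrow> U \<subseteq> rsocle R (Q S)"
    "\<And>V. rsubmodule R (Q S) V \<Longrightarrow> (\<forall>U. rsimple_sub R (Q S) U \<longrightarrow> U \<subseteq> V) \<Longrightarrow> rsocle R (Q S) \<subseteq> V"
proof -
  let ?F = "{V. rsubmodule R (Q S) V \<and> (\<forall>U. rsimple_sub R (Q S) U \<longrightarrow> U \<subseteq> V)}"
  have cF: "carrier (Q S) \<in> ?F" using Q_carrier_sub[OF assms] simple_sub_carrier[of "Q S"] by blast
  have "rsubmodule R (Q S) (\<Inter>?F)"
    by (rule Inter_sub) (use cF in blast, blast)
  then show "rsubmodule R (Q S) (rsocle R (Q S))" unfolding rsocle_def .
  show "rsocle R (Q S) \<subseteq> carrier (Q S)" unfolding rsocle_def using cF by (rule Inter_lower)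
  show "\<And>U. rsimple_sub R (Q S) U \<Longrightarrow> U \<subseteq> rsocle R (Q S)" unfolding rsocle_def by blast
  show "\<And>V. rsubmodule R (Q S) V \<Longrightarrow> (\<forall>U. rsimple_sub R (Q S) U \<longrightarrow> U \<subseteq> V) \<Longrightarrow> rsocle R (Q S) \<subseteq> V"
    unfolding rsocle_def by (rule Inter_lower) blast
qed

lemma next_socle_eq: "next_socle R S = {w \<in> carrier R. S +> w \<in> rsocle R (Q S)}"
  by (simp add: next_socle_def)

lemma next_socle_rid: assumes "rid R S" shows "rid R (next_socle R S)" "S \<subseteq> next_socle R S"
  using pre_rid[OF assms soc_props(1)[OF assms]] by (simp_all add: next_socle_eq)

end


context rring begin

lemma complement:
  assumes S: "rid R S" and XX: "rid R XX" "S \<subseteq> XX" "XX \<subseteq> next_socle R S"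
  shows "\<exists>Y. rid R Y \<and> S \<subseteq> Y \<and> Y \<subseteq> next_socle R S \<and> Y \<inter> XX \<subseteq> S \<and> next_socle R S \<subseteq> ssum R Y XX"
proof -
  let ?S' = "next_socle R S"
  have S': "rid R ?S'" "S \<subseteq> ?S'" using next_socle_rid[OF S] by auto
  define YY where "YY = {Y. rid R Y \<and> S \<subseteq> Y \<and> Y \<subseteq> ?S' \<and> Y \<inter> XX \<subseteq> S}"
  have SYY: "S \<in> YY" unfolding YY_def using S S' by blast
  have "\<forall>C\<in>chains YY. \<exists>U\<in>YY. \<forall>Z\<in>C. Z \<subseteq> U"
  proof
    fix C assume C: "C \<in> chains YY"
    show "\<exists>U\<in>YY. \<forall>Z\<in>C. Z \<subseteq> U"
    proof (cases "C = {}")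
      case True then show ?thesis using SYY by blast
    next
      case False
      have CY: "\<And>Z. Z \<in> C \<Longrightarrow> Z \<in> YY" using chainsD2[OF C] by blast
      have r: "rid R (\<Union>C)"
      proof (rule rid_Union_chain[OF False])
        show "\<forall>I\<in>C. rid R I" using CY unfolding YY_def by blast
        show "\<forall>I\<in>C. \<forall>J\<in>C. I \<subseteq> J \<or> J \<subseteq> I" using chainsD[OF C] by blast
      qed
      obtain Z0 where "Z0 \<in> C" using False by blast
      then have "S \<subseteq> \<Union>C" using CY unfolding YY_def by blast
      moreover have "\<Union>C \<subseteq> ?S'" using CY unfolding YY_def by blast
      moreover have "\<Union>C \<inter> XX \<subseteq> S" using CY unfolding YY_def by blast
      ultimately have "\<Union>C \<in> YY" using r unfolding YY_def by blast
      then show ?thesis by blast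
    qed
  qed
  from Zorn_Lemma2[OF this] obtain Y where Y: "Y \<in> YY" and max: "\<forall>Z\<in>YY. Y \<subseteq> Z \<longrightarrow> Z = Y"
    by blast
  have Yr: "rid R Y" "S \<subseteq> Y" "Y \<subseteq> ?S'" "Y \<inter> XX \<subseteq> S" using Y unfolding YY_def by auto
  let ?W = "ssum R Y XX"
  have ridW: "rid R ?W" by (rule ssum_rid[OF Yr(1) XX(1)])
  have YW: "Y \<subseteq> ?W" by (rule ssum_left[OF XX(1) ridD(1)[OF Yr(1)]])
  have soc: "rsocle R (Q S) \<subseteq> (\<lambda>w. S +> w) ` ?W"
  proof (rule soc_props(4)[OF S])
    show "rsubmodule R (Q S) ((\<lambda>w. S +> w) ` ?W)" by (rule img_sub[OF S ridW])
    show "\<forall>U. rsimple_sub R (Q S) U \<longrightarrow> U \<subseteq> (\<lambda>w. S +> w) ` ?W"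
    proof (intro allI impI)
      fix U assume U: "rsimple_sub R (Q S) U"
      have Usub: "rsubmodule R (Q S) U" and Unz: "U \<noteq> {S}"
        and Umin: "\<And>V. rsubmodule R (Q S) V \<Longrightarrow> V \<subseteq> U \<Longrightarrow> V = {S} \<or> V = U"
        using U unfolding rsimple_sub_def by auto
      define U' where "U' = {w \<in> carrier R. S +> w \<in> U}"
      have ridU': "rid R U'" and SU': "S \<subseteq> U'" using pre_rid[OF S Usub] unfolding U'_def by auto
      have U'S': "U' \<subseteq> ?S'"
      proof
        fix w assume "w \<in> U'"
        then have "w \<in> carrier R" "S +> w \<in> U" unfolding U'_def by auto
        then show "w \<in> ?S'" using soc_props(3)[OF S U] unfolding next_socle_eq by blast
      qed
      define V' where "V' = U' \<inter> ?W"
      have ridV': "rid R V'" unfolding V'_def by (rule rid_Int[OF ridU' ridW])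
      have Vsub: "rsubmodule R (Q S) ((\<lambda>w. S +> w) ` V')" by (rule img_sub[OF S ridV'])
      have VU: "(\<lambda>w. S +> w) ` V' \<subseteq> U" unfolding V'_def U'_def by auto
      from Umin[OF Vsub VU] show "U \<subseteq> (\<lambda>w. S +> w) ` ?W"
      proof
        assume "(\<lambda>w. S +> w) ` V' = U"
        then show ?thesis unfolding V'_def by auto
      next
        assume V0: "(\<lambda>w. S +> w) ` V' = {S}"
        have V'S: "V' \<subseteq> S"
        proof
          fix v assume v: "v \<in> V'"
          then have "S +> v = S" using V0 by blast
          moreover have "v \<in> carrier R" using v ridD(1)[OF ridV'] by blast
          ultimately show "v \<in> S" using cos_zero[OF S] by blast
        qed
        have "S \<in> U" using rsubD(2)[OF Usub] by simp
        then obtain A where A: "A \<in> U" "A \<noteq> S" using Unz by blast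
        then have "A \<in> carrier (Q S)" using rsubD(1)[OF Usub] by blast
        then obtain w0 where w0: "w0 \<in> carrier R" "A = S +> w0" by auto
        have w0U': "w0 \<in> U'" unfolding U'_def using w0 A by auto
        have w0S: "w0 \<notin> S" using cos_zero[OF S w0(1)] w0 A by blast
        let ?Y2 = "ssum R Y U'"
        have ridY2: "rid R ?Y2" by (rule ssum_rid[OF Yr(1) ridU'])
        have YY2: "Y \<subseteq> ?Y2" by (rule ssum_left[OF ridU' ridD(1)[OF Yr(1)]])
        have Y2S': "?Y2 \<subseteq> ?S'"
        proof
          fix z assume "z \<in> ?Y2"
          then obtain y u where "y \<in> Y" "u \<in> U'" "z = y \<oplus> u" unfolding ssum_def by blast
          then show "z \<in> ?S'" using ridD(3)[OF S'(1)] Yr(3) U'S' by blast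
        qed
        have Y2X: "?Y2 \<inter> XX \<subseteq> S"
        proof
          fix z assume z: "z \<in> ?Y2 \<inter> XX"
          then obtain y u where yu: "y \<in> Y" "u \<in> U'" "z = y \<oplus> u" unfolding ssum_def by blast
          have cy: "y \<in> carrier R" using yu(1) ridD(1)[OF Yr(1)] by blast
          have cu: "u \<in> carrier R" using yu(2) ridD(1)[OF ridU'] by blast
          have "u = \<ominus> y \<oplus> z" using yu(3) cy cu by (simp add: r_neg1)
          moreover have "\<ominus> y \<in> Y" using ridD(4)[OF Yr(1) yu(1)] .
          moreover have "z \<in> XX" using z by blast
          ultimately have "u \<in> ?W" unfolding ssum_def by blast
          then have "u \<in> V'" using yu(2) unfolding V'_def by blast
          then have "u \<in> Y" using V'S Yr(2) by blast
          then have "z \<in> Y" using ridD(3)[OF Yr(1) yu(1)] yu(3) by simp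
          then show "z \<in> S" using z Yr(4) by blast
        qed
        have "?Y2 \<in> YY" unfolding YY_def using ridY2 YY2 Yr(2) Y2S' Y2X by blast
        then have "?Y2 = Y" using max YY2 by blast
        moreover have "w0 \<in> ?Y2" using ssum_right[OF Yr(1) ridD(1)[OF ridU']] w0U' by blast
        ultimately have "w0 \<in> Y" by simp
        then have "w0 \<in> V'" unfolding V'_def using YW w0U' by blast
        then have False using V'S w0S by blast
        then show ?thesis ..
      qed
    qed
  qed
  have "?S' \<subseteq> ?W"
  proof
    fix z assume z: "z \<in> ?S'"
    then have cz: "z \<in> carrier R" and "S +> z \<in> rsocle R (Q S)" unfolding next_socle_eq by auto
    then obtain w where w: "w \<in> ?W" "S +> z = S +> w" using soc by blast
    have cw: "w \<in> carrier R" using w(1) ridD(1)[OF ridW] by blast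
    have "z \<ominus> w \<in> S" using cos_eq[OF S cz cw] w(2) by simp
    then have "z \<ominus> w \<in> ?W" using Yr(2) YW by blast
    then have "(z \<ominus> w) \<oplus> w \<in> ?W" using ridD(3)[OF ridW _ w(1)] by blast
    moreover have "(z \<ominus> w) \<oplus> w = z" using cz cw by (simp add: minus_eq a_assoc l_neg)
    ultimately show "z \<in> ?W" by simp
  qed
  then show ?thesis using Yr by blast
qed

end

inductive_set tower :: "('x set \<Rightarrow> 'x set) \<Rightarrow> 'x set \<Rightarrow> 'x set set" for f b where
  tb: "b \<in> tower f b"
| ts: "XX \<in> tower f b \<Longrightarrow> f XX \<in> tower f b"
| tu: "C \<noteq> {} \<Longrightarrow> \<forall>XX\<in>C. XX \<in> tower f b \<Longrightarrow> \<Union>C \<in> tower f b"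

locale infl = fixes f :: "'x set \<Rightarrow> 'x set" and b :: "'x set"
  assumes infl: "\<And>XX. XX \<subseteq> f XX"
begin

lemma tower_base: "XX \<in> tower f b \<Longrightarrow> b \<subseteq> XX"
proof (induction rule: tower.induct)
  case tb then show ?case by simp
next
  case (ts XX) then show ?case using infl[of XX] by blast
next
  case (tu C) then show ?case by blast
qed

lemma total':
  assumes "XX \<in> tower f b" "Y \<in> tower f b"
    and *: "\<And>Z. Z \<in> tower f b \<Longrightarrow> Z \<subseteq> Y \<Longrightarrow> Z = Y \<or> f Z \<subseteq> Y"
  shows "XX \<subseteq> Y \<or> f Y \<subseteq> XX"
  using assms(1)
proof (induction rule: tower.induct)
  case tb then show ?case using tower_base[OF assms(2)] by blast
next
  case (ts XX)
  from ts.IH show ?case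
  proof
    assume "XX \<subseteq> Y"
    then have "XX = Y \<or> f XX \<subseteq> Y" using *[OF ts.hyps] by blast
    then show ?thesis using infl[of XX] by blast
  next
    assume "f Y \<subseteq> XX" then show ?thesis using infl[of XX] by blast
  qed
next
  case (tu C)
  show ?case
  proof (cases "\<exists>Z\<in>C. f Y \<subseteq> Z")
    case True then show ?thesis by blast
  next
    case False then have "\<forall>Z\<in>C. Z \<subseteq> Y" using tu.IH by blast
    then show ?thesis by blast
  qed
qed

lemma subsetD':
  assumes "XX \<in> tower f b"
  shows "Y \<in> tower f b \<Longrightarrow> Y \<subseteq> XX \<Longrightarrow> XX = Y \<or> f Y \<subseteq> XX"
  using assms
proof (induction arbitrary: Y rule: tower.induct)
  case tb then show ?case using tower_base by blast
next
  case (ts XX)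
  have "Y \<subseteq> XX \<or> f XX \<subseteq> Y" using total'[OF ts.prems(1) ts.hyps] ts.IH by blast
  then show ?case
  proof
    assume "Y \<subseteq> XX"
    then have "XX = Y \<or> f Y \<subseteq> XX" using ts.IH ts.prems(1) by blast
    then show ?thesis using infl[of XX] by blast
  next
    assume "f XX \<subseteq> Y" then show ?thesis using ts.prems(2) by blast
  qed
next
  case (tu C)
  show ?case
  proof (rule ccontr)
    assume nc: "\<not> (\<Union>C = Y \<or> f Y \<subseteq> \<Union>C)"
    then obtain Z where Z: "Z \<in> C" "\<not> Z \<subseteq> Y" using tu.prems(2) by blast
    have ZT: "Z \<in> tower f b" using tu.IH Z(1) by blast
    have IHZ: "\<And>Y'. Y' \<in> tower f b \<Longrightarrow> Y' \<subseteq> Z \<Longrightarrow> Y' = Z \<or> f Y' \<subseteq> Z" using tu.IH Z(1) by blast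
    have "Y \<subseteq> Z \<or> f Z \<subseteq> Y" using total'[OF tu.prems(1) ZT IHZ] by blast
    then show False
    proof
      assume "Y \<subseteq> Z"
      then have "Z = Y \<or> f Y \<subseteq> Z" using IHZ tu.prems(1) by blast
      then show False using Z nc by blast
    next
      assume "f Z \<subseteq> Y" then show False using infl[of Z] Z by blast
    qed
  qed
qed

lemma total: "XX \<in> tower f b \<Longrightarrow> Y \<in> tower f b \<Longrightarrow> XX \<subseteq> Y \<or> Y \<subseteq> XX"
  using total'[of XX Y] subsetD'[of Y] infl[of Y] by blast

end

context rring begin

definition fsoc where "fsoc I = (if rid R I then next_socle R I else I)"

lemma fsoc_infl: "I \<subseteq> fsoc I"
  unfolding fsoc_def using next_socle_rid by auto

interpretation T: infl fsoc "{\<zero>}"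
  by unfold_locales (rule fsoc_infl)

lemma tower_rid: "XX \<in> tower fsoc {\<zero>} \<Longrightarrow> rid R XX"
proof (induction rule: tower.induct)
  case tb then show ?case by (rule rid_zero)
next
  case (ts XX) then show ?case unfolding fsoc_def using next_socle_rid by simp
next
  case (tu C)
  show ?case
  proof (rule rid_Union_chain[OF tu.hyps(1)])
    show "\<forall>I\<in>C. rid R I" using tu.IH by blast
    show "\<forall>I\<in>C. \<forall>J\<in>C. I \<subseteq> J \<or> J \<subseteq> I" using tu.IH T.total by blast
  qed
qed

lemma socle_tower: "I \<in> socle_seq R \<Longrightarrow> I \<in> tower fsoc {\<zero>}"
proof (induction rule: socle_seq.induct)
  case zero then show ?case by (rule tower.tb)
next
  case (succ I)
  then have "fsoc I = next_socle R I" using tower_rid unfolding fsoc_def by simp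
  then show ?case using tower.ts[OF succ.IH] by simp
next
  case (lim C) then show ?case using tower.tu by blast
qed

lemma soc_rid: "I \<in> socle_seq R \<Longrightarrow> rid R I"
  using socle_tower tower_rid by blast

lemma soc_total: "I \<in> socle_seq R \<Longrightarrow> J \<in> socle_seq R \<Longrightarrow> I \<subseteq> J \<or> J \<subseteq> I"
  using socle_tower T.total by blast

lemma carrier_soc: assumes sa: "right_semiartinian R"
  shows "carrier R \<in> socle_seq R"
proof -
  let ?U = "\<Union>(socle_seq R)"
  have U: "?U \<in> socle_seq R"
    by (rule socle_seq.lim) (use socle_seq.zero in blast, blast)
  have ridU: "rid R ?U" by (rule soc_rid[OF U])
  have nU: "next_socle R ?U \<subseteq> ?U" using socle_seq.succ[OF U] by blast
  have "?U = carrier R"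
  proof (rule ccontr)
    assume ne: "?U \<noteq> carrier R"
    have "right_ideal R ?U" using ridU right_ideal_rid by simp
    then have "rsocle R (Q ?U) \<noteq> {?U}" using sa ne unfolding right_semiartinian_def by simp
    moreover have "?U \<in> rsocle R (Q ?U)" using rsubD(2)[OF soc_props(1)[OF ridU]] by simp
    ultimately obtain A where A: "A \<in> rsocle R (Q ?U)" "A \<noteq> ?U" by blast
    then have "A \<in> carrier (Q ?U)" using soc_props(2)[OF ridU] by blast
    then obtain x where x: "x \<in> carrier R" "A = ?U +> x" by auto
    then have "x \<in> next_socle R ?U" using A unfolding next_socle_eq by simp
    then have "x \<in> ?U" using nU by blast
    then have "?U +> x = ?U" using cos_zero[OF ridU x(1)] by simp
    then show False using A x by simp
  qed
  then show ?thesis using U by simp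
qed

end


context rring begin

lemma cg_trans: "a \<in> carrier R \<Longrightarrow> b \<in> carrier R \<Longrightarrow> c \<in> carrier R \<Longrightarrow> rid R I \<Longrightarrow>
   a \<ominus> b \<in> I \<Longrightarrow> b \<ominus> c \<in> I \<Longrightarrow> a \<ominus> c \<in> I"
proof -
  assume c: "a \<in> carrier R" "b \<in> carrier R" "c \<in> carrier R" and I: "rid R I" and h: "a \<ominus> b \<in> I" "b \<ominus> c \<in> I"
  have "a \<ominus> c = (a \<ominus> b) \<oplus> (b \<ominus> c)" using c by algebra
  then show ?thesis using ridD(3)[OF I h] by simp
qed

lemma cg_sym: "a \<in> carrier R \<Longrightarrow> b \<in> carrier R \<Longrightarrow> rid R I \<Longrightarrow> a \<ominus> b \<in> I \<Longrightarrow> b \<ominus> a \<in> I"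
proof -
  assume c: "a \<in> carrier R" "b \<in> carrier R" and I: "rid R I" and h: "a \<ominus> b \<in> I"
  have "b \<ominus> a = \<ominus> (a \<ominus> b)" using c by algebra
  then show ?thesis using ridD(4)[OF I h] by simp
qed

lemma cg_add: "a \<in> carrier R \<Longrightarrow> b \<in> carrier R \<Longrightarrow> c \<in> carrier R \<Longrightarrow> d \<in> carrier R \<Longrightarrow> rid R I \<Longrightarrow>
   a \<ominus> b \<in> I \<Longrightarrow> c \<ominus> d \<in> I \<Longrightarrow> (a \<oplus> c) \<ominus> (b \<oplus> d) \<in> I"
proof -
  assume c: "a \<in> carrier R" "b \<in> carrier R" "c \<in> carrier R" "d \<in> carrier R" and I: "rid R I"
    and h: "a \<ominus> b \<in> I" "c \<ominus> d \<in> I"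
  have "(a \<oplus> c) \<ominus> (b \<oplus> d) = (a \<ominus> b) \<oplus> (c \<ominus> d)" using c by algebra
  then show ?thesis using ridD(3)[OF I h] by simp
qed

lemma cg_mult: "a \<in> carrier R \<Longrightarrow> b \<in> carrier R \<Longrightarrow> r \<in> carrier R \<Longrightarrow> rid R I \<Longrightarrow>
   a \<ominus> b \<in> I \<Longrightarrow> a \<otimes> r \<ominus> b \<otimes> r \<in> I"
proof -
  assume c: "a \<in> carrier R" "b \<in> carrier R" "r \<in> carrier R" and I: "rid R I" and h: "a \<ominus> b \<in> I"
  have "a \<otimes> r \<ominus> b \<otimes> r = (a \<ominus> b) \<otimes> r" using c by algebra
  then show ?thesis using ridD(5)[OF I h c(3)] by simp
qed

lemma cg_refl: "a \<in> carrier R \<Longrightarrow> rid R I \<Longrightarrow> a \<ominus> a \<in> I"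
  using ridD(2) by (simp add: r_neg minus_eq)

lemma cg_in: "a \<in> carrier R \<Longrightarrow> b \<in> carrier R \<Longrightarrow> rid R I \<Longrightarrow> a \<ominus> b \<in> I \<Longrightarrow> b \<in> I \<Longrightarrow> a \<in> I"
proof -
  assume c: "a \<in> carrier R" "b \<in> carrier R" and I: "rid R I" and h: "a \<ominus> b \<in> I" "b \<in> I"
  have "a = (a \<ominus> b) \<oplus> b" using c by algebra
  then show ?thesis using ridD(3)[OF I h] by simp
qed

lemma cg_zero: "a \<in> carrier R \<Longrightarrow> b \<in> carrier R \<Longrightarrow> a \<ominus> b \<in> {\<zero>} \<Longrightarrow> a = b"
proof -
  assume c: "a \<in> carrier R" "b \<in> carrier R" and h: "a \<ominus> b \<in> {\<zero>}"
  have "a = (a \<ominus> b) \<oplus> b" using c by algebra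
  then show ?thesis using h c by simp
qed

end

definition linmod :: "'a ring \<Rightarrow> ('a, 'b) module \<Rightarrow> 'a set \<Rightarrow> ('b \<Rightarrow> 'a) \<Rightarrow> bool" where
  "linmod R M I \<phi> \<longleftrightarrow> \<phi> \<in> carrier M \<rightarrow> carrier R \<and>
     (\<forall>x\<in>carrier M. \<forall>y\<in>carrier M. \<phi> (x \<oplus>\<^bsub>M\<^esub> y) \<ominus>\<^bsub>R\<^esub> (\<phi> x \<oplus>\<^bsub>R\<^esub> \<phi> y) \<in> I) \<and>
     (\<forall>x\<in>carrier M. \<forall>r\<in>carrier R. \<phi> (ract M x r) \<ominus>\<^bsub>R\<^esub> (\<phi> x \<otimes>\<^bsub>R\<^esub> r) \<in> I)"

lemma rhomD: assumes "rhom R M N f"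
  shows "x \<in> carrier M \<Longrightarrow> f x \<in> carrier N"
    "x \<in> carrier M \<Longrightarrow> y \<in> carrier M \<Longrightarrow> f (x \<oplus>\<^bsub>M\<^esub> y) = f x \<oplus>\<^bsub>N\<^esub> f y"
    "x \<in> carrier M \<Longrightarrow> r \<in> carrier R \<Longrightarrow> f (ract M x r) = ract N (f x) r"
  using assms unfolding rhom_def by auto

locale rmodule = rring R for R :: "'a ring" (structure) +
  fixes M :: "('a, 'b) module"
  assumes rmod: "right_module R M"
begin

lemma M_ag: "abelian_group M" using rmod unfolding right_module_def by blast

lemma ract_closed: "x \<in> carrier M \<Longrightarrow> r \<in> carrier R \<Longrightarrow> ract M x r \<in> carrier M"
  using rmod unfolding right_module_def by blast
lemma ract_addl: "x \<in> carrier M \<Longrightarrow> y \<in> carrier M \<Longrightarrow> r \<in> carrier R \<Longrightarrow>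
   ract M (x \<oplus>\<^bsub>M\<^esub> y) r = ract M x r \<oplus>\<^bsub>M\<^esub> ract M y r"
  using rmod unfolding right_module_def by blast
lemma ract_addr: "x \<in> carrier M \<Longrightarrow> r \<in> carrier R \<Longrightarrow> s \<in> carrier R \<Longrightarrow>
   ract M x (r \<oplus> s) = ract M x r \<oplus>\<^bsub>M\<^esub> ract M x s"
  using rmod unfolding right_module_def by blast
lemma ract_mult: "x \<in> carrier M \<Longrightarrow> r \<in> carrier R \<Longrightarrow> s \<in> carrier R \<Longrightarrow>
   ract M x (r \<otimes> s) = ract M (ract M x r) s"
  using rmod unfolding right_module_def by blast
lemma ract_one: "x \<in> carrier M \<Longrightarrow> ract M x \<one> = x"
  using rmod unfolding right_module_def by blast

lemma ract_zeror: assumes "x \<in> carrier M" shows "ract M x \<zero> = \<zero>\<^bsub>M\<^esub>"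
proof -
  interpret M: abelian_group M by (rule M_ag)
  have c: "ract M x \<zero> \<in> carrier M" using ract_closed assms by simp
  have "ract M x \<zero> \<oplus>\<^bsub>M\<^esub> ract M x \<zero> = ract M x \<zero>" using ract_addr[OF assms, of \<zero> \<zero>] by simp
  then show ?thesis using M.add.l_cancel_one[OF c c] by simp
qed

lemma ract_zerol: assumes "r \<in> carrier R" shows "ract M \<zero>\<^bsub>M\<^esub> r = \<zero>\<^bsub>M\<^esub>"
proof -
  interpret M: abelian_group M by (rule M_ag)
  have c: "ract M \<zero>\<^bsub>M\<^esub> r \<in> carrier M" using ract_closed assms by simp
  have "ract M \<zero>\<^bsub>M\<^esub> r \<oplus>\<^bsub>M\<^esub> ract M \<zero>\<^bsub>M\<^esub> r = ract M \<zero>\<^bsub>M\<^esub> r"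
    using ract_addl[of "\<zero>\<^bsub>M\<^esub>" "\<zero>\<^bsub>M\<^esub>" r] assms by simp
  then show ?thesis using M.add.l_cancel_one[OF c c] by simp
qed

lemma ract_negr: assumes "x \<in> carrier M" "r \<in> carrier R" shows "ract M x (\<ominus> r) = \<ominus>\<^bsub>M\<^esub> ract M x r"
proof -
  interpret M: abelian_group M by (rule M_ag)
  have "ract M x (\<ominus> r) \<oplus>\<^bsub>M\<^esub> ract M x r = \<zero>\<^bsub>M\<^esub>"
    using ract_addr[OF assms(1), of "\<ominus> r" r] assms ract_zeror[OF assms(1)] by (simp add: l_neg)
  then show ?thesis using M.minus_equality ract_closed assms by simp
qed

lemma ract_negl: assumes "x \<in> carrier M" "r \<in> carrier R" shows "ract M (\<ominus>\<^bsub>M\<^esub> x) r = \<ominus>\<^bsub>M\<^esub> ract M x r"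
proof -
  interpret M: abelian_group M by (rule M_ag)
  have "ract M (\<ominus>\<^bsub>M\<^esub> x) r \<oplus>\<^bsub>M\<^esub> ract M x r = \<zero>\<^bsub>M\<^esub>"
    using ract_addl[of "\<ominus>\<^bsub>M\<^esub> x" x r] assms ract_zerol[OF assms(2)] by (simp add: M.l_neg)
  then show ?thesis using M.minus_equality ract_closed assms by simp
qed

lemma ract_finsum: assumes "finite B" "g \<in> B \<rightarrow> carrier M" "r \<in> carrier R"
  shows "ract M (finsum M g B) r = finsum M (\<lambda>b. ract M (g b) r) B"
  using assms(1,2)
proof (induction B rule: finite_induct)
  case empty
  interpret M: abelian_group M by (rule M_ag)
  show ?case using ract_zerol[OF assms(3)] by simp
next
  case (insert b B)
  interpret M: abelian_group M by (rule M_ag)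
  have g: "g \<in> B \<rightarrow> carrier M" "g b \<in> carrier M" using insert.prems by auto
  have g2: "(\<lambda>b. ract M (g b) r) \<in> B \<rightarrow> carrier M" using g ract_closed assms(3) by auto
  have "ract M (finsum M g (insert b B)) r = ract M (g b \<oplus>\<^bsub>M\<^esub> finsum M g B) r"
    using M.finsum_insert[OF insert.hyps g(1) g(2)] by simp
  also have "\<dots> = ract M (g b) r \<oplus>\<^bsub>M\<^esub> ract M (finsum M g B) r"
    using ract_addl g M.finsum_closed assms(3) by simp
  also have "\<dots> = finsum M (\<lambda>b. ract M (g b) r) (insert b B)"
    using M.finsum_insert[OF insert.hyps g2] insert.IH[OF g(1)] ract_closed[OF g(2) assms(3)] by simp
  finally show ?case .
qed

lemma linmod_zero: assumes I: "rid R I" and l: "linmod R M I \<phi>" shows "\<phi> \<zero>\<^bsub>M\<^esub> \<in> I"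
proof -
  interpret M: abelian_group M by (rule M_ag)
  have c: "\<phi> \<zero>\<^bsub>M\<^esub> \<in> carrier R" using l unfolding linmod_def by auto
  have "\<phi> (\<zero>\<^bsub>M\<^esub> \<oplus>\<^bsub>M\<^esub> \<zero>\<^bsub>M\<^esub>) \<ominus> (\<phi> \<zero>\<^bsub>M\<^esub> \<oplus> \<phi> \<zero>\<^bsub>M\<^esub>) \<in> I" using l M.zero_closed unfolding linmod_def by blast
  moreover have "\<phi> (\<zero>\<^bsub>M\<^esub> \<oplus>\<^bsub>M\<^esub> \<zero>\<^bsub>M\<^esub>) \<ominus> (\<phi> \<zero>\<^bsub>M\<^esub> \<oplus> \<phi> \<zero>\<^bsub>M\<^esub>) = \<ominus> \<phi> \<zero>\<^bsub>M\<^esub>"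
    using c by simp algebra
  ultimately have "\<ominus> \<phi> \<zero>\<^bsub>M\<^esub> \<in> I" by simp
  then have "\<ominus> (\<ominus> \<phi> \<zero>\<^bsub>M\<^esub>) \<in> I" by (rule ridD(4)[OF I])
  then show ?thesis using c by simp
qed

lemma linmod_finsum:
  assumes I: "rid R I" and l: "linmod R M I \<phi>" and B: "finite B" "B \<subseteq> carrier M" and c: "c \<in> B \<rightarrow> carrier R"
  shows "\<phi> (finsum M (\<lambda>a. ract M a (c a)) B) \<ominus> finsum R (\<lambda>a. \<phi> a \<otimes> c a) B \<in> I"
  using B c
proof (induction B rule: finite_induct)
  case empty
  interpret M: abelian_group M by (rule M_ag)
  have c0: "\<phi> \<zero>\<^bsub>M\<^esub> \<in> carrier R" using l unfolding linmod_def by auto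
  show ?case using linmod_zero[OF I l] c0 by (simp add: minus_eq)
next
  case (insert b B)
  interpret M: abelian_group M by (rule M_ag)
  have phic: "\<And>x. x \<in> carrier M \<Longrightarrow> \<phi> x \<in> carrier R" using l unfolding linmod_def by auto
  have cb: "c b \<in> carrier R" "c \<in> B \<rightarrow> carrier R" using insert.prems by auto
  have bM: "b \<in> carrier M" "B \<subseteq> carrier M" using insert.prems by auto
  have f1: "(\<lambda>a. ract M a (c a)) \<in> B \<rightarrow> carrier M" using cb bM ract_closed by auto
  have f2: "(\<lambda>a. \<phi> a \<otimes> c a) \<in> B \<rightarrow> carrier R" using cb bM phic by auto
  let ?m = "ract M b (c b)" and ?s = "finsum M (\<lambda>a. ract M a (c a)) B"
  let ?t = "finsum R (\<lambda>a. \<phi> a \<otimes> c a) B"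
  have cm: "?m \<in> carrier M" "?s \<in> carrier M" using ract_closed bM cb M.finsum_closed f1 by auto
  have ct: "?t \<in> carrier R" using finsum_closed f2 by simp
  have e1: "finsum M (\<lambda>a. ract M a (c a)) (insert b B) = ?m \<oplus>\<^bsub>M\<^esub> ?s"
    using M.finsum_insert[OF insert.hyps f1] cm by simp
  have e2: "finsum R (\<lambda>a. \<phi> a \<otimes> c a) (insert b B) = \<phi> b \<otimes> c b \<oplus> ?t"
    using finsum_insert[OF insert.hyps f2] phic bM cb by simp
  have h1: "\<phi> (?m \<oplus>\<^bsub>M\<^esub> ?s) \<ominus> (\<phi> ?m \<oplus> \<phi> ?s) \<in> I" using l cm unfolding linmod_def by blast
  have h2: "\<phi> ?m \<ominus> \<phi> b \<otimes> c b \<in> I" using l bM cb unfolding linmod_def by blast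
  have h3: "\<phi> ?s \<ominus> ?t \<in> I" using insert.IH[OF bM(2) cb(2)] .
  have h4: "(\<phi> ?m \<oplus> \<phi> ?s) \<ominus> (\<phi> b \<otimes> c b \<oplus> ?t) \<in> I"
    by (rule cg_add[OF phic[OF cm(1)] m_closed[OF phic[OF bM(1)] cb(1)] phic[OF cm(2)] ct I h2 h3])
  have "\<phi> (?m \<oplus>\<^bsub>M\<^esub> ?s) \<ominus> (\<phi> b \<otimes> c b \<oplus> ?t) \<in> I"
    by (rule cg_trans[OF phic[OF M.a_closed[OF cm]] _ _ I h1 h4])
       (use phic cm ct bM cb in auto)
  then show ?case using e1 e2 by simp
qed

end

lemma rhom_comp_fs:
  assumes M: "right_module R M" and N: "right_module R N" and q: "rhom R M N q"
    and B: "finite B" and g: "g \<in> B \<rightarrow> carrier M"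
  shows "q (finsum M g B) = finsum N (\<lambda>b. q (g b)) B"
  using B g
proof (induction B rule: finite_induct)
  case empty
  interpret M: abelian_group M using M unfolding right_module_def by blast
  interpret N: abelian_group N using N unfolding right_module_def by blast
  have "q \<zero>\<^bsub>M\<^esub> \<oplus>\<^bsub>N\<^esub> q \<zero>\<^bsub>M\<^esub> = q \<zero>\<^bsub>M\<^esub>" using rhomD(2)[OF q, of "\<zero>\<^bsub>M\<^esub>" "\<zero>\<^bsub>M\<^esub>"] by simp
  then have "q \<zero>\<^bsub>M\<^esub> = \<zero>\<^bsub>N\<^esub>" using N.add.l_cancel_one rhomD(1)[OF q M.zero_closed] by simp
  then show ?case by simp
next
  case (insert b B)
  interpret M: abelian_group M using M unfolding right_module_def by blast
  interpret N: abelian_group N using N unfolding right_module_def by blast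
  have g: "g \<in> B \<rightarrow> carrier M" "g b \<in> carrier M" using insert.prems by auto
  have g2: "(\<lambda>b. q (g b)) \<in> B \<rightarrow> carrier N" using g rhomD(1)[OF q] by auto
  have "q (finsum M g (insert b B)) = q (g b \<oplus>\<^bsub>M\<^esub> finsum M g B)"
    using M.finsum_insert[OF insert.hyps g] by simp
  also have "\<dots> = q (g b) \<oplus>\<^bsub>N\<^esub> q (finsum M g B)" using rhomD(2)[OF q] g M.finsum_closed by simp
  also have "\<dots> = finsum N (\<lambda>b. q (g b)) (insert b B)"
    using N.finsum_insert[OF insert.hyps g2] insert.IH[OF g(1)] rhomD(1)[OF q g(2)] by simp
  finally show ?case .
qed


context rring begin

lemma rid_finsum: assumes K: "rid R K" and B: "finite B" and f: "\<forall>b\<in>B. f b \<in> K"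
  shows "finsum R f B \<in> K"
  using B f
proof (induction B rule: finite_induct)
  case empty then show ?case using ridD(2)[OF K] by simp
next
  case (insert b B)
  have fc: "f \<in> B \<rightarrow> carrier R" "f b \<in> carrier R" using insert.prems ridD(1)[OF K] by auto
  have "finsum R f (insert b B) = f b \<oplus> finsum R f B" using finsum_insert[OF insert.hyps fc] .
  then show ?case using ridD(3)[OF K] insert by simp
qed

lemma cg_finsum: assumes I: "rid R I" and B: "finite B" and u: "u \<in> B \<rightarrow> carrier R" and v: "v \<in> B \<rightarrow> carrier R"
  and h: "\<forall>b\<in>B. u b \<ominus> v b \<in> I"
  shows "finsum R u B \<ominus> finsum R v B \<in> I"
  using B u v h
proof (induction B rule: finite_induct)
  case empty then show ?case using ridD(2)[OF I] by (simp add: minus_eq)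
next
  case (insert b B)
  have c: "u \<in> B \<rightarrow> carrier R" "u b \<in> carrier R" "v \<in> B \<rightarrow> carrier R" "v b \<in> carrier R" using insert.prems by auto
  have e: "finsum R u (insert b B) = u b \<oplus> finsum R u B" "finsum R v (insert b B) = v b \<oplus> finsum R v B"
    using finsum_insert[OF insert.hyps c(1,2)] finsum_insert[OF insert.hyps c(3,4)] by auto
  have "(u b \<oplus> finsum R u B) \<ominus> (v b \<oplus> finsum R v B) \<in> I"
    by (rule cg_add[OF c(2,4) finsum_closed[OF c(1)] finsum_closed[OF c(3)] I])
       (use insert in auto)
  then show ?case using e by simp
qed

lemma regroup:
  assumes A: "finite A" and B: "finite B" and G: "G ` A \<subseteq> B" and rho: "rho \<in> B \<rightarrow> carrier R"
    and c: "c \<in> A \<rightarrow> carrier R"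
  shows "\<exists>d\<in>B \<rightarrow> carrier R. finsum R (\<lambda>a. rho (G a) \<otimes> c a) A = finsum R (\<lambda>b. rho b \<otimes> d b) B"
proof -
  have rc: "\<And>b. b \<in> B \<Longrightarrow> rho b \<in> carrier R" using rho by blast
  show ?thesis
  using A G c
proof (induction A rule: finite_induct)
  case empty
  have "finsum R (\<lambda>b. rho b \<otimes> \<zero>) B = finsum R (\<lambda>b. \<zero>) B"
    by (rule finsum_cong') (use rho rc in \<open>auto intro: r_null\<close>)
  then have "finsum R (\<lambda>b. rho b \<otimes> \<zero>) B = \<zero>" by simp
  then show ?case by (intro bexI[of _ "\<lambda>b. \<zero>"]) auto
next
  case (insert a A)
  have Ga: "G a \<in> B" using insert.prems by auto
  have ca: "c a \<in> carrier R" using insert.prems by auto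
  obtain d where d: "d \<in> B \<rightarrow> carrier R" "finsum R (\<lambda>a. rho (G a) \<otimes> c a) A = finsum R (\<lambda>b. rho b \<otimes> d b) B"
    using insert.IH insert.prems by auto
  define d' where "d' = (\<lambda>b. if G a = b then d b \<oplus> c a else d b)"
  have dc: "\<And>b. b \<in> B \<Longrightarrow> d b \<in> carrier R" using d(1) by blast
  have d': "d' \<in> B \<rightarrow> carrier R" using dc ca unfolding d'_def by auto
  have f1: "(\<lambda>b. rho b \<otimes> d b) \<in> B \<rightarrow> carrier R" using dc rc by auto
  have f2: "(\<lambda>b. if G a = b then rho b \<otimes> c a else \<zero>) \<in> B \<rightarrow> carrier R" using rho rc ca by auto
  have "finsum R (\<lambda>b. rho b \<otimes> d' b) B = finsum R (\<lambda>b. rho b \<otimes> d b \<oplus> (if G a = b then rho b \<otimes> c a else \<zero>)) B"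
    by (rule finsum_cong') (use rho rc dc ca in \<open>auto simp: d'_def r_distr\<close>)
  also have "\<dots> = finsum R (\<lambda>b. rho b \<otimes> d b) B \<oplus> finsum R (\<lambda>b. if G a = b then rho b \<otimes> c a else \<zero>) B"
    by (rule finsum_addf[OF f1 f2])
  also have "finsum R (\<lambda>b. if G a = b then rho b \<otimes> c a else \<zero>) B = rho (G a) \<otimes> c a"
    using finsum_singleton[OF Ga B, of "\<lambda>b. rho b \<otimes> c a"] rho rc ca by auto
  finally have e: "finsum R (\<lambda>b. rho b \<otimes> d' b) B = finsum R (\<lambda>b. rho b \<otimes> d b) B \<oplus> rho (G a) \<otimes> c a" .
  have f3: "(\<lambda>a. rho (G a) \<otimes> c a) \<in> A \<rightarrow> carrier R" using insert.prems rho rc by auto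
  have "finsum R (\<lambda>a. rho (G a) \<otimes> c a) (insert a A) = rho (G a) \<otimes> c a \<oplus> finsum R (\<lambda>a. rho (G a) \<otimes> c a) A"
    using finsum_insert[OF insert.hyps f3] rho rc Ga ca by auto
  also have "\<dots> = finsum R (\<lambda>b. rho b \<otimes> d' b) B"
    using e d(2) finsum_closed[OF f1] rc Ga ca by (simp add: a_comm)
  finally show ?case using d' by blast
qed
qed

lemma fin_max: assumes "finite F" "F \<subseteq> C" "C \<noteq> {}" "\<forall>I\<in>C. \<forall>J\<in>C. I \<subseteq> J \<or> J \<subseteq> I"
  shows "\<exists>J\<in>C. \<forall>I\<in>F. I \<subseteq> J"
  using assms(1,2)
proof (induction F rule: finite_induct)
  case empty then show ?case using assms(3) by blast
next
  case (insert K F)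
  then obtain J where J: "J \<in> C" "\<forall>I\<in>F. I \<subseteq> J" by blast
  have "K \<in> C" using insert.prems by blast
  then have "K \<subseteq> J \<or> J \<subseteq> K" using assms(4) J(1) by blast
  then show ?case using J \<open>K \<in> C\<close> by blast
qed

end

lemma layer_simps[simp]:
  "carrier (layer R S) = (\<lambda>x. a_r_coset R S x) ` next_socle R S"
  "ring.add (layer R S) = set_add R" "ring.zero (layer R S) = S"
  "ract (layer R S) A s = set_add R ((\<lambda>x. x \<otimes>\<^bsub>R\<^esub> s) ` A) S"
  by (simp_all add: layer_def)


locale setting = rmodule R M for R :: "'a ring" (structure) and M :: "('a, 'b) module" +
  assumes fg: "fin_gen R M" and wp: "weakly_projective R M"
begin

lemma wp_step:
  assumes S: "S \<in> socle_seq R" "S \<noteq> {\<zero>}" "S \<noteq> carrier R"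
    and hl: "linmod R M S h" and hS': "\<forall>x\<in>carrier M. h x \<in> next_socle R S"
  shows "\<exists>g. rhom R M (RR R) g \<and> (\<forall>x\<in>carrier M. g x \<ominus> h x \<in> S)"
proof -
  interpret M: abelian_group M by (rule M_ag)
  have rS: "rid R S" by (rule soc_rid[OF S(1)])
  let ?S' = "next_socle R S"
  have rS': "rid R ?S'" "S \<subseteq> ?S'" using next_socle_rid[OF rS] by auto
  have hc: "\<And>x. x \<in> carrier M \<Longrightarrow> h x \<in> carrier R" using hl unfolding linmod_def by auto
  have hadd: "\<And>x y. x \<in> carrier M \<Longrightarrow> y \<in> carrier M \<Longrightarrow> h (x \<oplus>\<^bsub>M\<^esub> y) \<ominus> (h x \<oplus> h y) \<in> S"
    using hl unfolding linmod_def by blast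
  have hmul: "\<And>x r. x \<in> carrier M \<Longrightarrow> r \<in> carrier R \<Longrightarrow> h (ract M x r) \<ominus> h x \<otimes> r \<in> S"
    using hl unfolding linmod_def by blast
  define F where "F x = S +> h x" for x
  let ?L = "layer R S"
  have F_add: "\<And>x y. x \<in> carrier M \<Longrightarrow> y \<in> carrier M \<Longrightarrow> set_add R (F x) (F y) = F (x \<oplus>\<^bsub>M\<^esub> y)"
  proof -
    fix x y assume xy: "x \<in> carrier M" "y \<in> carrier M"
    have "S +> h (x \<oplus>\<^bsub>M\<^esub> y) = S +> (h x \<oplus> h y)"
      using cos_eq[OF rS hc[OF M.a_closed[OF xy]] a_closed[OF hc[OF xy(1)] hc[OF xy(2)]]] hadd[OF xy] by simp
    then show "set_add R (F x) (F y) = F (x \<oplus>\<^bsub>M\<^esub> y)"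
      unfolding F_def using cos_add[OF rS hc[OF xy(1)] hc[OF xy(2)]] by simp
  qed
  have F_ract: "\<And>x r. x \<in> carrier M \<Longrightarrow> r \<in> carrier R \<Longrightarrow> ract ?L (F x) r = F (ract M x r)"
  proof -
    fix x r assume xr: "x \<in> carrier M" "r \<in> carrier R"
    have "S +> h (ract M x r) = S +> (h x \<otimes> r)"
      using cos_eq[OF rS hc[OF ract_closed[OF xr]] m_closed[OF hc[OF xr(1)] xr(2)]] hmul[OF xr] by simp
    then show "ract ?L (F x) r = F (ract M x r)"
      unfolding F_def using cos_mult[OF rS hc[OF xr(1)] xr(2)] by simp
  qed
  have F0: "F \<zero>\<^bsub>M\<^esub> = S" unfolding F_def using cos_zero[OF rS hc[OF M.zero_closed]] linmod_zero[OF rS hl] by simp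
  have Fhom: "rhom R M ?L F"
    unfolding rhom_def
  proof (intro conjI ballI)
    show "F \<in> carrier M \<rightarrow> carrier ?L" using hS' unfolding F_def by auto
  next
    fix x y assume "x \<in> carrier M" "y \<in> carrier M"
    then show "F (x \<oplus>\<^bsub>M\<^esub> y) = F x \<oplus>\<^bsub>?L\<^esub> F y" using F_add by simp
  next
    fix x r assume "x \<in> carrier M" "r \<in> carrier R"
    then show "F (ract M x r) = ract ?L (F x) r" using F_ract by simp
  qed
  let ?U = "F ` carrier M"
  let ?N = "submod ?L ?U"
  have amN: "abelian_monoid ?N"
  proof (rule abelian_monoidI)
    fix a b assume "a \<in> carrier ?N" "b \<in> carrier ?N"
    then obtain x y where xy: "x \<in> carrier M" "y \<in> carrier M" "a = F x" "b = F y" by auto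
    show "a \<oplus>\<^bsub>?N\<^esub> b \<in> carrier ?N" using xy F_add by simp
    show "a \<oplus>\<^bsub>?N\<^esub> b = b \<oplus>\<^bsub>?N\<^esub> a" using xy F_add M.a_comm by simp
  next
    show "\<zero>\<^bsub>?N\<^esub> \<in> carrier ?N" using F0[symmetric] by auto
  next
    fix a b c assume "a \<in> carrier ?N" "b \<in> carrier ?N" "c \<in> carrier ?N"
    then obtain x y z where xy: "x \<in> carrier M" "y \<in> carrier M" "z \<in> carrier M" "a = F x" "b = F y" "c = F z"
      by auto
    show "a \<oplus>\<^bsub>?N\<^esub> b \<oplus>\<^bsub>?N\<^esub> c = a \<oplus>\<^bsub>?N\<^esub> (b \<oplus>\<^bsub>?N\<^esub> c)" using xy F_add M.a_assoc by simp
  next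
    fix a assume "a \<in> carrier ?N"
    then obtain x where xy: "x \<in> carrier M" "a = F x" by auto
    have "set_add R (F \<zero>\<^bsub>M\<^esub>) (F x) = F x" using F_add[OF M.zero_closed xy(1)] xy(1) by simp
    then show "\<zero>\<^bsub>?N\<^esub> \<oplus>\<^bsub>?N\<^esub> a = a" using xy F0 by simp
  qed
  have fgN: "fin_gen R ?N"
  proof -
    obtain A where A: "finite A" "A \<subseteq> carrier M"
      and rep: "\<forall>x\<in>carrier M. \<exists>c\<in>A \<rightarrow> carrier R. x = finsum M (\<lambda>a. ract M a (c a)) A"
      using fg unfolding fin_gen_def by blast
    let ?B = "F ` A"
    define rho where "rho b = h (inv_into A F b)" for b
    have iB: "\<And>b. b \<in> ?B \<Longrightarrow> inv_into A F b \<in> A \<and> F (inv_into A F b) = b"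
      by (simp add: inv_into_into f_inv_into_f)
    have rhoc: "\<And>b. b \<in> ?B \<Longrightarrow> rho b \<in> carrier R" unfolding rho_def using iB A(2) hc by blast
    have brep: "\<And>b. b \<in> ?B \<Longrightarrow> b = S +> rho b" unfolding rho_def using iB unfolding F_def by metis
    have ractN: "\<And>b r. b \<in> ?B \<Longrightarrow> r \<in> carrier R \<Longrightarrow> ract ?N b r = S +> (rho b \<otimes> r) \<and> S +> (rho b \<otimes> r) \<in> ?U"
    proof -
      fix b r assume br: "b \<in> ?B" "r \<in> carrier R"
      have e: "ract ?N b r = S +> (rho b \<otimes> r)"
        using cos_mult[OF rS rhoc[OF br(1)] br(2)] brep[OF br(1)] by simp
      have "ract ?N b r = F (ract M (inv_into A F b) r)"
        using F_ract[of "inv_into A F b" r] iB[OF br(1)] A(2) br(2) by auto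
      moreover have "F (ract M (inv_into A F b) r) \<in> ?U" using ract_closed iB[OF br(1)] A(2) br(2) by blast
      ultimately show "ract ?N b r = S +> (rho b \<otimes> r) \<and> S +> (rho b \<otimes> r) \<in> ?U" using e by simp
    qed
    have fsN: "\<And>B'. finite B' \<Longrightarrow> z \<in> B' \<rightarrow> carrier R \<Longrightarrow> (\<forall>b\<in>B'. S +> z b \<in> ?U) \<Longrightarrow>
        finsum ?N (\<lambda>b. S +> z b) B' = S +> finsum R z B'" for z
    proof -
      fix B' assume "finite B'" "z \<in> B' \<rightarrow> carrier R" "\<forall>b\<in>B'. S +> z b \<in> ?U"
      then show "finsum ?N (\<lambda>b. S +> z b) B' = S +> finsum R z B'"
      proof (induction B' rule: finite_induct)
        case empty
        then show ?case using cos_self[OF rS] abelian_monoid.finsum_empty[OF amN] by simp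
      next
        case (insert b B')
        have zc: "z \<in> B' \<rightarrow> carrier R" "z b \<in> carrier R" using insert.prems by auto
        have f: "(\<lambda>b. S +> z b) \<in> B' \<rightarrow> carrier ?N" "S +> z b \<in> carrier ?N" using insert.prems by auto
        have "finsum ?N (\<lambda>b. S +> z b) (insert b B') = (S +> z b) \<oplus>\<^bsub>?N\<^esub> finsum ?N (\<lambda>b. S +> z b) B'"
          using abelian_monoid.finsum_insert[OF amN insert.hyps f] .
        also have "\<dots> = set_add R (S +> z b) (S +> finsum R z B')" using insert.IH zc insert.prems by simp
        also have "\<dots> = S +> (z b \<oplus> finsum R z B')" using cos_add[OF rS zc(2) finsum_closed[OF zc(1)]] .
        also have "\<dots> = S +> finsum R z (insert b B')" using finsum_insert[OF insert.hyps zc] by simp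
        finally show ?case .
      qed
    qed
    show ?thesis unfolding fin_gen_def
    proof (intro exI conjI ballI)
      show "finite ?B" using A(1) by simp
      show "?B \<subseteq> carrier ?N" using A(2) by auto
    next
      fix y assume "y \<in> carrier ?N"
      then obtain x where x: "x \<in> carrier M" "y = F x" by auto
      obtain c where c: "c \<in> A \<rightarrow> carrier R" "x = finsum M (\<lambda>a. ract M a (c a)) A" using rep x(1) by blast
      obtain d where d: "d \<in> ?B \<rightarrow> carrier R"
        "finsum R (\<lambda>a. rho (F a) \<otimes> c a) A = finsum R (\<lambda>b. rho b \<otimes> d b) ?B"
        using regroup[where G=F and rho=rho, OF A(1) finite_imageI[OF A(1), of F] _ _ c(1)] rhoc by (auto simp: Pi_iff)
      have dc: "\<And>b. b \<in> ?B \<Longrightarrow> d b \<in> carrier R" using d(1) by blast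
      have cc: "\<And>a. a \<in> A \<Longrightarrow> c a \<in> carrier R" using c(1) by blast
      have "finsum ?N (\<lambda>b. ract ?N b (d b)) ?B = finsum ?N (\<lambda>b. S +> (rho b \<otimes> d b)) ?B"
        by (rule abelian_monoid.finsum_cong'[OF amN]) (use ractN dc in auto)
      also have "\<dots> = S +> finsum R (\<lambda>b. rho b \<otimes> d b) ?B"
        by (rule fsN) (use A(1) rhoc dc ractN in auto)
      finally have e1: "finsum ?N (\<lambda>b. ract ?N b (d b)) ?B = S +> finsum R (\<lambda>b. rho b \<otimes> d b) ?B" .
      have f1: "(\<lambda>a. h a \<otimes> c a) \<in> A \<rightarrow> carrier R" using hc A(2) cc by auto
      have f2: "(\<lambda>a. rho (F a) \<otimes> c a) \<in> A \<rightarrow> carrier R" using rhoc cc by auto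
      have f3: "(\<lambda>b. rho b \<otimes> d b) \<in> ?B \<rightarrow> carrier R" using rhoc dc by auto
      have g1: "h x \<ominus> finsum R (\<lambda>a. h a \<otimes> c a) A \<in> S"
        using linmod_finsum[OF rS hl A c(1)] c(2) by simp
      have g2: "finsum R (\<lambda>a. h a \<otimes> c a) A \<ominus> finsum R (\<lambda>a. rho (F a) \<otimes> c a) A \<in> S"
      proof (rule cg_finsum[OF rS A(1) f1 f2], intro ballI)
        fix a assume a: "a \<in> A"
        have "S +> h a = S +> rho (F a)" using brep[of "F a"] a unfolding F_def by auto
        then have "h a \<ominus> rho (F a) \<in> S" using cos_eq[OF rS hc rhoc] a A(2) by auto
        then show "h a \<otimes> c a \<ominus> rho (F a) \<otimes> c a \<in> S"
          using cg_mult[OF hc rhoc cc rS] a A(2) by auto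
      qed
      have "h x \<ominus> finsum R (\<lambda>b. rho b \<otimes> d b) ?B \<in> S"
        using cg_trans[OF hc[OF x(1)] finsum_closed[OF f1] finsum_closed[OF f2] rS g1 g2] d(2) by simp
      then have "S +> h x = S +> finsum R (\<lambda>b. rho b \<otimes> d b) ?B"
        using cos_eq[OF rS hc[OF x(1)] finsum_closed[OF f3]] by simp
      then have "y = finsum ?N (\<lambda>b. ract ?N b (d b)) ?B" using e1 x(2) unfolding F_def by simp
      then show "\<exists>c\<in>?B \<rightarrow> carrier R. y = finsum ?N (\<lambda>a. ract ?N a (c a)) ?B" using d(1) by blast
    qed
  qed
  obtain g where g: "rhom R M (submod (RR R) ?S') g" "\<forall>x\<in>carrier M. F x = S +>\<^bsub>RR R\<^esub> g x"
    using wp[unfolded weakly_projective_def, rule_format, OF S(1) S(2) S(3) conjI[OF Fhom fgN]] by blast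
  have gS': "\<And>x. x \<in> carrier M \<Longrightarrow> g x \<in> ?S'" using g(1) unfolding rhom_def by auto
  have gc: "\<And>x. x \<in> carrier M \<Longrightarrow> g x \<in> carrier R" using gS' ridD(1)[OF rS'(1)] by blast
  have "rhom R M (RR R) g" using g(1) gc unfolding rhom_def by auto
  moreover have "\<forall>x\<in>carrier M. g x \<ominus> h x \<in> S"
  proof
    fix x assume x: "x \<in> carrier M"
    have "S +> h x = S +> g x" using g(2) x unfolding F_def by simp
    then have "h x \<ominus> g x \<in> S" using cos_eq[OF rS hc[OF x] gc[OF x]] by simp
    then show "g x \<ominus> h x \<in> S" using cg_sym[OF hc[OF x] gc[OF x] rS] by simp
  qed
  ultimately show ?thesis by blast
qed

end


context setting begin

lemma lift_soc:
  "S \<in> socle_seq R \<Longrightarrow> \<forall>I \<phi>. rid R I \<longrightarrow> linmod R M I \<phi> \<longrightarrow> (\<forall>x\<in>carrier M. \<phi> x \<in> ssum R S I) \<longrightarrow>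
      (\<exists>u. rhom R M (RR R) u \<and> (\<forall>x\<in>carrier M. u x \<ominus> \<phi> x \<in> I))"
proof (induction rule: socle_seq.induct)
  case zero
  show ?case
  proof (intro allI impI)
    fix I \<phi> assume I: "rid R I" and l: "linmod R M I \<phi>" and v: "\<forall>x\<in>carrier M. \<phi> x \<in> ssum R {\<zero>} I"
    have vI: "\<And>x. x \<in> carrier M \<Longrightarrow> \<phi> x \<in> I"
    proof -
      fix x assume "x \<in> carrier M"
      then obtain i where "i \<in> I" "\<phi> x = \<zero> \<oplus> i" using v unfolding ssum_def by blast
      then show "\<phi> x \<in> I" using ridD(1)[OF I] by auto
    qed
    have "rhom R M (RR R) (\<lambda>x. \<zero>)" unfolding rhom_def by auto
    moreover have "\<forall>x\<in>carrier M. \<zero> \<ominus> \<phi> x \<in> I"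
    proof
      fix x assume x: "x \<in> carrier M"
      have "\<phi> x \<in> carrier R" using vI[OF x] ridD(1)[OF I] by blast
      then have "\<zero> \<ominus> \<phi> x = \<ominus> \<phi> x" by (simp add: minus_eq)
      then show "\<zero> \<ominus> \<phi> x \<in> I" using ridD(4)[OF I vI[OF x]] by simp
    qed
    ultimately show "\<exists>u. rhom R M (RR R) u \<and> (\<forall>x\<in>carrier M. u x \<ominus> \<phi> x \<in> I)" by blast
  qed
next
  case (succ S)
  interpret M: abelian_group M by (rule M_ag)
  have rS: "rid R S" by (rule soc_rid[OF succ.hyps])
  let ?S' = "next_socle R S"
  have rS': "rid R ?S'" "S \<subseteq> ?S'" using next_socle_rid[OF rS] by auto
  show ?case
  proof (intro allI impI)
    fix I \<phi> assume I: "rid R I" and l: "linmod R M I \<phi>" and v: "\<forall>x\<in>carrier M. \<phi> x \<in> ssum R ?S' I"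
    have phic: "\<And>x. x \<in> carrier M \<Longrightarrow> \<phi> x \<in> carrier R" using l unfolding linmod_def by auto
    have ladd: "\<And>x y. x \<in> carrier M \<Longrightarrow> y \<in> carrier M \<Longrightarrow> \<phi> (x \<oplus>\<^bsub>M\<^esub> y) \<ominus> (\<phi> x \<oplus> \<phi> y) \<in> I"
      using l unfolding linmod_def by blast
    have lmul: "\<And>x r. x \<in> carrier M \<Longrightarrow> r \<in> carrier R \<Longrightarrow> \<phi> (ract M x r) \<ominus> \<phi> x \<otimes> r \<in> I"
      using l unfolding linmod_def by blast
    show "\<exists>u. rhom R M (RR R) u \<and> (\<forall>x\<in>carrier M. u x \<ominus> \<phi> x \<in> I)"
    proof (cases "S = carrier R")
      case True
      then have "?S' = S" using rS' ridD(1)[OF rS'(1)] by blast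
      then show ?thesis using succ.IH I l v by simp
    next
      case notc: False
      let ?SI = "ssum R S I"
      have rSI: "rid R ?SI" by (rule ssum_rid[OF rS I])
      have SSI: "S \<subseteq> ?SI" by (rule ssum_left[OF I ridD(1)[OF rS]])
      have ISI: "I \<subseteq> ?SI" by (rule ssum_right[OF rS ridD(1)[OF I]])
      let ?X = "?S' \<inter> ?SI"
      have rX: "rid R ?X" by (rule rid_Int[OF rS'(1) rSI])
      obtain Y where Y: "rid R Y" "S \<subseteq> Y" "Y \<subseteq> ?S'" "Y \<inter> ?X \<subseteq> S" "?S' \<subseteq> ssum R Y ?X"
        using complement[OF rS rX] rS' SSI by blast
      have Yc: "\<And>y. y \<in> Y \<Longrightarrow> y \<in> carrier R" using ridD(1)[OF Y(1)] by blast
      have SIc: "\<And>y. y \<in> ?SI \<Longrightarrow> y \<in> carrier R" using ridD(1)[OF rSI] by blast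
      have hex: "\<And>x. x \<in> carrier M \<Longrightarrow> \<exists>y. y \<in> Y \<and> \<phi> x \<ominus> y \<in> ?SI"
      proof -
        fix x assume x: "x \<in> carrier M"
        obtain s i where si: "s \<in> ?S'" "i \<in> I" "\<phi> x = s \<oplus> i" using v x unfolding ssum_def by blast
        obtain y x' where yx: "y \<in> Y" "x' \<in> ?X" "s = y \<oplus> x'" using Y(5) si(1) unfolding ssum_def by blast
        have c: "y \<in> carrier R" "x' \<in> carrier R" "i \<in> carrier R" using yx si Yc ridD(1)[OF rX] ridD(1)[OF I] by auto
        have "\<phi> x \<ominus> y = x' \<oplus> i" using si(3) yx(3) c by simp algebra
        moreover have "x' \<oplus> i \<in> ?SI" using ridD(3)[OF rSI] yx(2) ISI si(2) by blast
        ultimately show "\<exists>y. y \<in> Y \<and> \<phi> x \<ominus> y \<in> ?SI" using yx(1) by auto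
      qed
      define h where "h x = (SOME y. y \<in> Y \<and> \<phi> x \<ominus> y \<in> ?SI)" for x
      have hY: "\<And>x. x \<in> carrier M \<Longrightarrow> h x \<in> Y \<and> \<phi> x \<ominus> h x \<in> ?SI"
        unfolding h_def using hex by (rule someI_ex)
      have hc: "\<And>x. x \<in> carrier M \<Longrightarrow> h x \<in> carrier R" using hY Yc by blast
      have hS': "\<forall>x\<in>carrier M. h x \<in> ?S'" using hY Y(3) by blast
      have inS: "\<And>z. z \<in> Y \<Longrightarrow> z \<in> ?SI \<Longrightarrow> z \<in> S" using Y(3,4) by blast
      have hl: "linmod R M S h"
        unfolding linmod_def
      proof (intro conjI ballI)
        show "h \<in> carrier M \<rightarrow> carrier R" using hc by auto
      next
        fix x y assume xy: "x \<in> carrier M" "y \<in> carrier M"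
        have xyc: "x \<oplus>\<^bsub>M\<^esub> y \<in> carrier M" using xy by simp
        have "h (x \<oplus>\<^bsub>M\<^esub> y) \<ominus> (h x \<oplus> h y) \<in> Y"
          using ridD(6)[OF Y(1)] ridD(3)[OF Y(1)] hY xy xyc by blast
        moreover have "h (x \<oplus>\<^bsub>M\<^esub> y) \<ominus> (h x \<oplus> h y) \<in> ?SI"
        proof -
          have a1: "h (x \<oplus>\<^bsub>M\<^esub> y) \<ominus> \<phi> (x \<oplus>\<^bsub>M\<^esub> y) \<in> ?SI"
            using cg_sym[OF phic[OF xyc] hc[OF xyc] rSI] hY[OF xyc] by blast
          have a2: "\<phi> (x \<oplus>\<^bsub>M\<^esub> y) \<ominus> (\<phi> x \<oplus> \<phi> y) \<in> ?SI" using ladd[OF xy] ISI by blast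
          have a3: "(\<phi> x \<oplus> \<phi> y) \<ominus> (h x \<oplus> h y) \<in> ?SI"
            using cg_add[OF phic[OF xy(1)] hc[OF xy(1)] phic[OF xy(2)] hc[OF xy(2)] rSI] hY xy by blast
          have a4: "h (x \<oplus>\<^bsub>M\<^esub> y) \<ominus> (\<phi> x \<oplus> \<phi> y) \<in> ?SI"
            using cg_trans[OF hc[OF xyc] phic[OF xyc] _ rSI a1 a2] phic xy by blast
          show ?thesis using cg_trans[OF hc[OF xyc] _ _ rSI a4 a3] phic hc xy by blast
        qed
        ultimately show "h (x \<oplus>\<^bsub>M\<^esub> y) \<ominus> (h x \<oplus> h y) \<in> S" using inS by blast
      next
        fix x r assume xr: "x \<in> carrier M" "r \<in> carrier R"
        have xrc: "ract M x r \<in> carrier M" using ract_closed xr by simp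
        have "h (ract M x r) \<ominus> h x \<otimes> r \<in> Y"
          using ridD(6)[OF Y(1)] ridD(5)[OF Y(1)] hY xr xrc by blast
        moreover have "h (ract M x r) \<ominus> h x \<otimes> r \<in> ?SI"
        proof -
          have a1: "h (ract M x r) \<ominus> \<phi> (ract M x r) \<in> ?SI"
            using cg_sym[OF phic[OF xrc] hc[OF xrc] rSI] hY[OF xrc] by blast
          have a2: "\<phi> (ract M x r) \<ominus> \<phi> x \<otimes> r \<in> ?SI" using lmul[OF xr] ISI by blast
          have a3: "\<phi> x \<otimes> r \<ominus> h x \<otimes> r \<in> ?SI"
            using cg_mult[OF phic[OF xr(1)] hc[OF xr(1)] xr(2) rSI] hY xr by blast
          have a4: "h (ract M x r) \<ominus> \<phi> x \<otimes> r \<in> ?SI"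
            using cg_trans[OF hc[OF xrc] phic[OF xrc] _ rSI a1 a2] phic xr by blast
          show ?thesis using cg_trans[OF hc[OF xrc] _ _ rSI a4 a3] phic hc xr by blast
        qed
        ultimately show "h (ract M x r) \<ominus> h x \<otimes> r \<in> S" using inS by blast
      qed
      obtain g1 where g1: "rhom R M (RR R) g1" "\<forall>x\<in>carrier M. g1 x \<ominus> h x \<in> S"
      proof (cases "S = {\<zero>}")
        case True
        have "rhom R M (RR R) h" unfolding rhom_def
        proof (intro conjI ballI)
          show "h \<in> carrier M \<rightarrow> carrier (RR R)" using hc by auto
        next
          fix x y assume xy: "x \<in> carrier M" "y \<in> carrier M"
          show "h (x \<oplus>\<^bsub>M\<^esub> y) = h x \<oplus>\<^bsub>RR R\<^esub> h y"
            using cg_zero[OF hc[OF M.a_closed[OF xy]] a_closed[OF hc[OF xy(1)] hc[OF xy(2)]]] hl xy True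
            unfolding linmod_def by simp
        next
          fix x r assume xr: "x \<in> carrier M" "r \<in> carrier R"
          show "h (ract M x r) = ract (RR R) (h x) r"
            using cg_zero[OF hc[OF ract_closed[OF xr]] m_closed[OF hc[OF xr(1)] xr(2)]] hl xr True
            unfolding linmod_def by simp
        qed
        moreover have "\<forall>x\<in>carrier M. h x \<ominus> h x \<in> S" using cg_refl[OF hc rS] by blast
        ultimately show ?thesis using that by blast
      next
        case False
        show ?thesis using wp_step[OF succ.hyps False notc hl hS'] that by blast
      qed
      have g1c: "\<And>x. x \<in> carrier M \<Longrightarrow> g1 x \<in> carrier R" using rhomD(1)[OF g1(1)] by simp
      have g1add: "\<And>x y. x \<in> carrier M \<Longrightarrow> y \<in> carrier M \<Longrightarrow> g1 (x \<oplus>\<^bsub>M\<^esub> y) = g1 x \<oplus> g1 y"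
        using rhomD(2)[OF g1(1)] by simp
      have g1mul: "\<And>x r. x \<in> carrier M \<Longrightarrow> r \<in> carrier R \<Longrightarrow> g1 (ract M x r) = g1 x \<otimes> r"
        using rhomD(3)[OF g1(1)] by simp
      define psi where "psi x = \<phi> x \<ominus> g1 x" for x
      have psic: "\<And>x. x \<in> carrier M \<Longrightarrow> psi x \<in> carrier R" unfolding psi_def using phic g1c by simp
      have lpsi: "linmod R M I psi" unfolding linmod_def
      proof (intro conjI ballI)
        show "psi \<in> carrier M \<rightarrow> carrier R" using psic by auto
      next
        fix x y assume xy: "x \<in> carrier M" "y \<in> carrier M"
        have "psi (x \<oplus>\<^bsub>M\<^esub> y) \<ominus> (psi x \<oplus> psi y) = \<phi> (x \<oplus>\<^bsub>M\<^esub> y) \<ominus> (\<phi> x \<oplus> \<phi> y)"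
          unfolding psi_def using g1add[OF xy] phic[OF M.a_closed[OF xy]] phic[OF xy(1)] phic[OF xy(2)] g1c[OF xy(1)] g1c[OF xy(2)] by simp algebra
        then show "psi (x \<oplus>\<^bsub>M\<^esub> y) \<ominus> (psi x \<oplus> psi y) \<in> I" using ladd[OF xy] by simp
      next
        fix x r assume xr: "x \<in> carrier M" "r \<in> carrier R"
        have "psi (ract M x r) \<ominus> psi x \<otimes> r = \<phi> (ract M x r) \<ominus> \<phi> x \<otimes> r"
          unfolding psi_def using g1mul[OF xr] phic[OF ract_closed[OF xr]] phic[OF xr(1)] g1c[OF xr(1)] xr(2) by simp algebra
        then show "psi (ract M x r) \<ominus> psi x \<otimes> r \<in> I" using lmul[OF xr] by simp
      qed
      have vpsi: "\<forall>x\<in>carrier M. psi x \<in> ?SI"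
      proof
        fix x assume x: "x \<in> carrier M"
        have "psi x = (\<phi> x \<ominus> h x) \<oplus> (h x \<ominus> g1 x)" unfolding psi_def using phic[OF x] hc[OF x] g1c[OF x] by algebra
        moreover have "h x \<ominus> g1 x \<in> ?SI" using cg_sym[OF g1c[OF x] hc[OF x] rS] g1(2) x SSI by blast
        ultimately show "psi x \<in> ?SI" using ridD(3)[OF rSI] hY[OF x] by simp
      qed
      obtain u where u: "rhom R M (RR R) u" "\<forall>x\<in>carrier M. u x \<ominus> psi x \<in> I"
        using succ.IH I lpsi vpsi by blast
      have uc: "\<And>x. x \<in> carrier M \<Longrightarrow> u x \<in> carrier R" using rhomD(1)[OF u(1)] by simp
      have uadd: "\<And>x y. x \<in> carrier M \<Longrightarrow> y \<in> carrier M \<Longrightarrow> u (x \<oplus>\<^bsub>M\<^esub> y) = u x \<oplus> u y"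
        using rhomD(2)[OF u(1)] by simp
      have umul: "\<And>x r. x \<in> carrier M \<Longrightarrow> r \<in> carrier R \<Longrightarrow> u (ract M x r) = u x \<otimes> r"
        using rhomD(3)[OF u(1)] by simp
      have "rhom R M (RR R) (\<lambda>x. g1 x \<oplus> u x)" unfolding rhom_def
      proof (intro conjI ballI)
        show "(\<lambda>x. g1 x \<oplus> u x) \<in> carrier M \<rightarrow> carrier (RR R)" using g1c uc by auto
      next
        fix x y assume xy: "x \<in> carrier M" "y \<in> carrier M"
        show "g1 (x \<oplus>\<^bsub>M\<^esub> y) \<oplus> u (x \<oplus>\<^bsub>M\<^esub> y) = (g1 x \<oplus> u x) \<oplus>\<^bsub>RR R\<^esub> (g1 y \<oplus> u y)"
          using g1add[OF xy] uadd[OF xy] g1c uc xy by (simp add: a_ac)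
      next
        fix x r assume xr: "x \<in> carrier M" "r \<in> carrier R"
        show "g1 (ract M x r) \<oplus> u (ract M x r) = ract (RR R) (g1 x \<oplus> u x) r"
          using g1mul[OF xr] umul[OF xr] g1c uc xr by (simp add: l_distr)
      qed
      moreover have "\<forall>x\<in>carrier M. (g1 x \<oplus> u x) \<ominus> \<phi> x \<in> I"
      proof
        fix x assume x: "x \<in> carrier M"
        have "(g1 x \<oplus> u x) \<ominus> \<phi> x = u x \<ominus> psi x" unfolding psi_def using g1c[OF x] uc[OF x] phic[OF x] by algebra
        then show "(g1 x \<oplus> u x) \<ominus> \<phi> x \<in> I" using u(2) x by simp
      qed
      ultimately show ?thesis by blast
    qed
  qed
next
  case (lim C)
  interpret M: abelian_group M by (rule M_ag)
  show ?case
  proof (intro allI impI)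
    fix I \<phi> assume I: "rid R I" and l: "linmod R M I \<phi>" and v: "\<forall>x\<in>carrier M. \<phi> x \<in> ssum R (\<Union>C) I"
    have phic: "\<And>x. x \<in> carrier M \<Longrightarrow> \<phi> x \<in> carrier R" using l unfolding linmod_def by auto
    obtain A where A: "finite A" "A \<subseteq> carrier M"
      and rep: "\<forall>x\<in>carrier M. \<exists>c\<in>A \<rightarrow> carrier R. x = finsum M (\<lambda>a. ract M a (c a)) A"
      using fg unfolding fin_gen_def by blast
    have "\<forall>a\<in>A. \<exists>J. J \<in> C \<and> \<phi> a \<in> ssum R J I"
    proof
      fix a assume "a \<in> A"
      then have "\<phi> a \<in> ssum R (\<Union>C) I" using v A(2) by blast
      then obtain s i J where "J \<in> C" "s \<in> J" "i \<in> I" "\<phi> a = s \<oplus> i" unfolding ssum_def by blast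
      then show "\<exists>J. J \<in> C \<and> \<phi> a \<in> ssum R J I" unfolding ssum_def by blast
    qed
    then obtain Jf where Jf: "\<forall>a\<in>A. Jf a \<in> C \<and> \<phi> a \<in> ssum R (Jf a) I" by metis
    have Csoc: "\<forall>J\<in>C. J \<in> socle_seq R" using lim.IH by blast
    have sub: "Jf ` A \<subseteq> C" using Jf by auto
    have tot: "\<forall>I\<in>C. \<forall>J\<in>C. I \<subseteq> J \<or> J \<subseteq> I" using Csoc soc_total by blast
    obtain J where J: "J \<in> C" "\<forall>K\<in>Jf ` A. K \<subseteq> J"
      using fin_max[OF finite_imageI[OF A(1)] sub lim.hyps(1) tot] by blast
    have rJ: "rid R J" using soc_rid Csoc J(1) by blast
    let ?SJ = "ssum R J I"
    have rSJ: "rid R ?SJ" by (rule ssum_rid[OF rJ I])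
    have ISJ: "I \<subseteq> ?SJ" by (rule ssum_right[OF rJ ridD(1)[OF I]])
    have vA: "\<forall>a\<in>A. \<phi> a \<in> ?SJ"
    proof
      fix a assume a: "a \<in> A"
      then have "\<phi> a \<in> ssum R (Jf a) I" "Jf a \<subseteq> J" using Jf J(2) by auto
      then show "\<phi> a \<in> ?SJ" unfolding ssum_def by blast
    qed
    have vJ: "\<forall>x\<in>carrier M. \<phi> x \<in> ?SJ"
    proof
      fix x assume x: "x \<in> carrier M"
      obtain c where c: "c \<in> A \<rightarrow> carrier R" "x = finsum M (\<lambda>a. ract M a (c a)) A" using rep x by blast
      have f: "(\<lambda>a. \<phi> a \<otimes> c a) \<in> A \<rightarrow> carrier R" using c(1) phic A(2) by auto
      have "\<phi> x \<ominus> finsum R (\<lambda>a. \<phi> a \<otimes> c a) A \<in> I" using linmod_finsum[OF I l A c(1)] c(2) by simp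
      then have d: "\<phi> x \<ominus> finsum R (\<lambda>a. \<phi> a \<otimes> c a) A \<in> ?SJ" using ISJ by blast
      have "finsum R (\<lambda>a. \<phi> a \<otimes> c a) A \<in> ?SJ"
        by (rule rid_finsum[OF rSJ A(1)]) (use vA ridD(5)[OF rSJ] c(1) in blast)
      then show "\<phi> x \<in> ?SJ" using cg_in[OF phic[OF x] finsum_closed[OF f] rSJ d] by blast
    qed
    have "\<forall>I \<phi>. rid R I \<longrightarrow> linmod R M I \<phi> \<longrightarrow> (\<forall>x\<in>carrier M. \<phi> x \<in> ssum R J I) \<longrightarrow>
      (\<exists>u. rhom R M (RR R) u \<and> (\<forall>x\<in>carrier M. u x \<ominus> \<phi> x \<in> I))" using lim.IH J(1) by blast
    then show "\<exists>u. rhom R M (RR R) u \<and> (\<forall>x\<in>carrier M. u x \<ominus> \<phi> x \<in> I)" using I l vJ by blast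
  qed
qed

end


context abelian_group begin
lemma agG3: "a \<in> carrier G \<Longrightarrow> b \<in> carrier G \<Longrightarrow> c \<in> carrier G \<Longrightarrow> d \<in> carrier G \<Longrightarrow> (a \<oplus> b) \<ominus> (c \<oplus> d) = (a \<ominus> c) \<oplus> (b \<ominus> d)"
  by (simp add: minus_eq minus_add a_ac)
lemma agG4: "t \<in> carrier G \<Longrightarrow> a \<in> carrier G \<Longrightarrow> u \<in> carrier G \<Longrightarrow> t \<ominus> u = (t \<ominus> a) \<oplus> (a \<ominus> u)"
  by (simp add: minus_eq minus_add minus_minus a_ac r_neg1 r_neg2)
lemma agG5: "t \<in> carrier G \<Longrightarrow> u \<in> carrier G \<Longrightarrow> t = u \<oplus> (t \<ominus> u)"
  by (simp add: minus_eq minus_add minus_minus a_ac r_neg1 r_neg2 r_neg)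
lemma agG6: "p \<in> carrier G \<Longrightarrow> q \<in> carrier G \<Longrightarrow> (p \<oplus> q) \<ominus> p = q"
  by (simp add: minus_eq a_comm[of p q] a_assoc r_neg)
lemma agG2: "a \<in> carrier G \<Longrightarrow> c \<in> carrier G \<Longrightarrow> t \<in> carrier G \<Longrightarrow> a \<ominus> c = (t \<ominus> c) \<ominus> (t \<ominus> a)"
  using agG4[of t a c] agG6[of "t \<ominus> a" "a \<ominus> c"] by simp
lemma agG1: "a1 \<in> carrier G \<Longrightarrow> a2 \<in> carrier G \<Longrightarrow> a3 \<in> carrier G \<Longrightarrow> tx \<in> carrier G \<Longrightarrow> ty \<in> carrier G \<Longrightarrow>
  a1 \<ominus> (a2 \<oplus> a3) = ((tx \<ominus> a2) \<oplus> (ty \<ominus> a3)) \<ominus> ((tx \<oplus> ty) \<ominus> a1)"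
  using agG3[of tx ty a2 a3] agG2[of a1 "a2 \<oplus> a3" "tx \<oplus> ty"] by simp
end

definition span :: "'a ring \<Rightarrow> ('a, 'b) module \<Rightarrow> 'b set \<Rightarrow> 'b set" where
  "span R M B = {y. \<exists>c\<in>B \<rightarrow> carrier R. y = finsum M (\<lambda>b. ract M b (c b)) B}"

context rmodule begin

lemma span_zero: assumes B: "finite B" "B \<subseteq> carrier M" shows "\<zero>\<^bsub>M\<^esub> \<in> span R M B"
proof -
  interpret M: abelian_group M by (rule M_ag)
  have "finsum M (\<lambda>b. ract M b \<zero>) B = finsum M (\<lambda>b. \<zero>\<^bsub>M\<^esub>) B"
    by (rule M.finsum_cong') (use B ract_zeror in auto)
  then have "\<zero>\<^bsub>M\<^esub> = finsum M (\<lambda>b. ract M b ((\<lambda>_. \<zero>) b)) B" by simp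
  then show ?thesis unfolding span_def by (intro CollectI bexI[of _ "\<lambda>_. \<zero>"]) auto
qed

lemma span_carrier: assumes B: "finite B" "B \<subseteq> carrier M" shows "span R M B \<subseteq> carrier M"
proof
  interpret M: abelian_group M by (rule M_ag)
  fix y assume "y \<in> span R M B"
  then obtain c where c: "c \<in> B \<rightarrow> carrier R" "y = finsum M (\<lambda>b. ract M b (c b)) B" unfolding span_def by blast
  have "(\<lambda>b. ract M b (c b)) \<in> B \<rightarrow> carrier M" using c(1) B ract_closed by auto
  then show "y \<in> carrier M" using c(2) M.finsum_closed by simp
qed

lemma span_add: assumes B: "finite B" "B \<subseteq> carrier M" and u: "u \<in> span R M B" and v: "v \<in> span R M B"
  shows "u \<oplus>\<^bsub>M\<^esub> v \<in> span R M B"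
proof -
  interpret M: abelian_group M by (rule M_ag)
  obtain c where c: "c \<in> B \<rightarrow> carrier R" "u = finsum M (\<lambda>b. ract M b (c b)) B" using u unfolding span_def by blast
  obtain d where d: "d \<in> B \<rightarrow> carrier R" "v = finsum M (\<lambda>b. ract M b (d b)) B" using v unfolding span_def by blast
  have cc: "\<And>b. b \<in> B \<Longrightarrow> c b \<in> carrier R" "\<And>b. b \<in> B \<Longrightarrow> d b \<in> carrier R" using c(1) d(1) by auto
  have f1: "(\<lambda>b. ract M b (c b)) \<in> B \<rightarrow> carrier M" "(\<lambda>b. ract M b (d b)) \<in> B \<rightarrow> carrier M"
    using cc B ract_closed by auto
  have "u \<oplus>\<^bsub>M\<^esub> v = finsum M (\<lambda>b. ract M b (c b) \<oplus>\<^bsub>M\<^esub> ract M b (d b)) B"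
    using M.finsum_addf[OF f1] c(2) d(2) by simp
  also have "\<dots> = finsum M (\<lambda>b. ract M b (c b \<oplus> d b)) B"
    by (rule M.finsum_cong') (use B cc ract_addr ract_closed in auto)
  finally have "u \<oplus>\<^bsub>M\<^esub> v = finsum M (\<lambda>b. ract M b ((\<lambda>b. c b \<oplus> d b) b)) B" .
  moreover have "(\<lambda>b. c b \<oplus> d b) \<in> B \<rightarrow> carrier R" using cc by auto
  ultimately show ?thesis unfolding span_def by (intro CollectI bexI[of _ "\<lambda>b. c b \<oplus> d b"]) simp_all
qed

lemma span_ract: assumes B: "finite B" "B \<subseteq> carrier M" and u: "u \<in> span R M B" and r: "r \<in> carrier R"
  shows "ract M u r \<in> span R M B"
proof -
  interpret M: abelian_group M by (rule M_ag)
  obtain c where c: "c \<in> B \<rightarrow> carrier R" "u = finsum M (\<lambda>b. ract M b (c b)) B" using u unfolding span_def by blast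
  have cc: "\<And>b. b \<in> B \<Longrightarrow> c b \<in> carrier R" using c(1) by auto
  have f1: "(\<lambda>b. ract M b (c b)) \<in> B \<rightarrow> carrier M" using cc B ract_closed by auto
  have "ract M u r = finsum M (\<lambda>b. ract M (ract M b (c b)) r) B"
    using ract_finsum[OF B(1) f1 r] c(2) by simp
  also have "\<dots> = finsum M (\<lambda>b. ract M b (c b \<otimes> r)) B"
    by (rule M.finsum_cong') (use B cc r ract_mult ract_closed in auto)
  finally have "ract M u r = finsum M (\<lambda>b. ract M b ((\<lambda>b. c b \<otimes> r) b)) B" .
  moreover have "(\<lambda>b. c b \<otimes> r) \<in> B \<rightarrow> carrier R" using cc r by auto
  ultimately show ?thesis unfolding span_def by (intro CollectI bexI[of _ "\<lambda>b. c b \<otimes> r"]) simp_all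
qed

lemma span_neg: assumes B: "finite B" "B \<subseteq> carrier M" and u: "u \<in> span R M B"
  shows "\<ominus>\<^bsub>M\<^esub> u \<in> span R M B"
proof -
  interpret M: abelian_group M by (rule M_ag)
  have uc: "u \<in> carrier M" using span_carrier[OF B] u by blast
  have "ract M u (\<ominus> \<one>) \<in> span R M B" using span_ract[OF B u] by simp
  moreover have "ract M u (\<ominus> \<one>) = \<ominus>\<^bsub>M\<^esub> u" using ract_negr[OF uc one_closed] ract_one[OF uc] by simp
  ultimately show ?thesis by simp
qed

lemma span_minus: assumes B: "finite B" "B \<subseteq> carrier M" and u: "u \<in> span R M B" and v: "v \<in> span R M B"
  shows "u \<ominus>\<^bsub>M\<^esub> v \<in> span R M B"
proof -
  interpret M: abelian_group M by (rule M_ag)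
  show ?thesis using span_add[OF B u span_neg[OF B v]] by (simp add: M.minus_eq)
qed

end

context setting begin

lemma RP: assumes sa: "right_semiartinian R" and I: "rid R I" and l: "linmod R M I \<phi>"
  shows "\<exists>u. rhom R M (RR R) u \<and> (\<forall>x\<in>carrier M. u x \<ominus> \<phi> x \<in> I)"
proof -
  have v: "\<forall>x\<in>carrier M. \<phi> x \<in> ssum R (carrier R) I"
  proof
    fix x assume "x \<in> carrier M"
    then have "\<phi> x \<in> carrier R" using l unfolding linmod_def by auto
    then have "\<phi> x = \<phi> x \<oplus> \<zero>" "\<zero> \<in> I" using ridD(2)[OF I] by auto
    then show "\<phi> x \<in> ssum R (carrier R) I" unfolding ssum_def using \<open>\<phi> x \<in> carrier R\<close> by blast
  qed
  show ?thesis using lift_soc[OF carrier_soc[OF sa]] I l v by blast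
qed

end


context rmodule begin

lemma ract_minusr: "x \<in> carrier M \<Longrightarrow> r \<in> carrier R \<Longrightarrow> s \<in> carrier R \<Longrightarrow>
  ract M x (r \<ominus> s) = ract M x r \<ominus>\<^bsub>M\<^esub> ract M x s"
proof -
  interpret M: abelian_group M by (rule M_ag)
  assume a: "x \<in> carrier M" "r \<in> carrier R" "s \<in> carrier R"
  then show ?thesis by (simp add: minus_eq M.minus_eq ract_addr ract_negr)
qed

lemma ract_minusl: "x \<in> carrier M \<Longrightarrow> y \<in> carrier M \<Longrightarrow> r \<in> carrier R \<Longrightarrow>
  ract M (x \<ominus>\<^bsub>M\<^esub> y) r = ract M x r \<ominus>\<^bsub>M\<^esub> ract M y r"
proof -
  interpret M: abelian_group M by (rule M_ag)
  assume a: "x \<in> carrier M" "y \<in> carrier M" "r \<in> carrier R"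
  then show ?thesis by (simp add: M.minus_eq ract_addl ract_negl)
qed

end

context setting begin

lemma dual: assumes sa: "right_semiartinian R"
  shows "finite B \<Longrightarrow> B \<subseteq> carrier M \<Longrightarrow> \<forall>\<tau>. rhom R M M \<tau> \<longrightarrow> (\<forall>x\<in>carrier M. \<tau> x \<in> span R M B) \<longrightarrow>
     (\<exists>s. (\<forall>b\<in>B. rhom R M (RR R) (s b)) \<and> (\<forall>x\<in>carrier M. \<tau> x = finsum M (\<lambda>b. ract M b (s b x)) B))"
proof (induction B rule: finite_induct)
  case empty
  interpret M: abelian_group M by (rule M_ag)
  show ?case
  proof (intro allI impI)
    fix \<tau> assume sp: "\<forall>x\<in>carrier M. \<tau> x \<in> span R M {}"
    have "\<forall>x\<in>carrier M. \<tau> x = \<zero>\<^bsub>M\<^esub>"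
      using sp unfolding span_def by auto
    then show "\<exists>s. (\<forall>b\<in>{}. rhom R M (RR R) (s b)) \<and> (\<forall>x\<in>carrier M. \<tau> x = finsum M (\<lambda>b. ract M b (s b x)) {})"
      by (intro exI[of _ "\<lambda>b x. \<zero>"]) simp
  qed
next
  case (insert b B)
  interpret M: abelian_group M by (rule M_ag)
  have bM: "b \<in> carrier M" and BM: "B \<subseteq> carrier M" using insert.prems by auto
  let ?sp = "span R M B"
  have spc: "\<And>y. y \<in> ?sp \<Longrightarrow> y \<in> carrier M" using span_carrier[OF insert.hyps(1) BM] by blast
  show ?case
  proof (intro allI impI)
    fix \<tau> assume tau: "rhom R M M \<tau>" and sp: "\<forall>x\<in>carrier M. \<tau> x \<in> span R M (insert b B)"
    have tc: "\<And>x. x \<in> carrier M \<Longrightarrow> \<tau> x \<in> carrier M" using rhomD(1)[OF tau] .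
    have tadd: "\<And>x y. x \<in> carrier M \<Longrightarrow> y \<in> carrier M \<Longrightarrow> \<tau> (x \<oplus>\<^bsub>M\<^esub> y) = \<tau> x \<oplus>\<^bsub>M\<^esub> \<tau> y"
      using rhomD(2)[OF tau] .
    have tmul: "\<And>x r. x \<in> carrier M \<Longrightarrow> r \<in> carrier R \<Longrightarrow> \<tau> (ract M x r) = ract M (\<tau> x) r"
      using rhomD(3)[OF tau] .
    define Ib where "Ib = {r \<in> carrier R. ract M b r \<in> ?sp}"
    have rIb: "rid R Ib" unfolding rid_def
    proof (intro conjI ballI)
      show "Ib \<subseteq> carrier R" unfolding Ib_def by blast
      show "\<zero> \<in> Ib" unfolding Ib_def using ract_zeror[OF bM] span_zero[OF insert.hyps(1) BM] by simp
    next
      fix x y assume "x \<in> Ib" "y \<in> Ib"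
      then show "x \<oplus> y \<in> Ib" unfolding Ib_def using ract_addr[OF bM] span_add[OF insert.hyps(1) BM] by simp
    next
      fix x assume "x \<in> Ib"
      then show "\<ominus> x \<in> Ib" unfolding Ib_def using ract_negr[OF bM] span_neg[OF insert.hyps(1) BM] by simp
    next
      fix x r assume "x \<in> Ib" "r \<in> carrier R"
      then show "x \<otimes> r \<in> Ib" unfolding Ib_def
        using ract_mult[OF bM] span_ract[OF insert.hyps(1) BM] by simp
    qed
    have dec: "\<And>x. x \<in> carrier M \<Longrightarrow> \<exists>r. r \<in> carrier R \<and> \<tau> x \<ominus>\<^bsub>M\<^esub> ract M b r \<in> ?sp"
    proof -
      fix x assume x: "x \<in> carrier M"
      obtain c where c: "c \<in> insert b B \<rightarrow> carrier R" "\<tau> x = finsum M (\<lambda>a. ract M a (c a)) (insert b B)"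
        using sp x unfolding span_def by blast
      have cc: "\<And>a. a \<in> insert b B \<Longrightarrow> c a \<in> carrier R" using c(1) by blast
      have f: "(\<lambda>a. ract M a (c a)) \<in> B \<rightarrow> carrier M" using cc BM ract_closed by auto
      have e: "\<tau> x = ract M b (c b) \<oplus>\<^bsub>M\<^esub> finsum M (\<lambda>a. ract M a (c a)) B"
        using M.finsum_insert[OF insert.hyps f ract_closed[OF bM cc]] c(2) by simp
      have inB: "finsum M (\<lambda>a. ract M a (c a)) B \<in> ?sp"
        unfolding span_def using c(1) by (intro CollectI bexI[of _ c]) auto
      have "\<tau> x \<ominus>\<^bsub>M\<^esub> ract M b (c b) = finsum M (\<lambda>a. ract M a (c a)) B"
        using e M.agG6[OF ract_closed[OF bM cc] M.finsum_closed[OF f]] by simp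
      then show "\<exists>r. r \<in> carrier R \<and> \<tau> x \<ominus>\<^bsub>M\<^esub> ract M b r \<in> ?sp" using inB cc[of b]
        by (intro exI[of _ "c b"]) simp
    qed
    define \<phi> where "\<phi> x = (SOME r. r \<in> carrier R \<and> \<tau> x \<ominus>\<^bsub>M\<^esub> ract M b r \<in> ?sp)" for x
    have phi: "\<And>x. x \<in> carrier M \<Longrightarrow> \<phi> x \<in> carrier R \<and> \<tau> x \<ominus>\<^bsub>M\<^esub> ract M b (\<phi> x) \<in> ?sp"
      unfolding \<phi>_def using dec by (rule someI_ex)
    have phic: "\<And>x. x \<in> carrier M \<Longrightarrow> \<phi> x \<in> carrier R" using phi by blast
    have ev: "\<And>x. x \<in> carrier M \<Longrightarrow> \<tau> x \<ominus>\<^bsub>M\<^esub> ract M b (\<phi> x) \<in> ?sp" using phi by blast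
    have arc: "\<And>r. r \<in> carrier R \<Longrightarrow> ract M b r \<in> carrier M" using ract_closed[OF bM] .
    have lphi: "linmod R M Ib \<phi>" unfolding linmod_def
    proof (intro conjI ballI)
      show "\<phi> \<in> carrier M \<rightarrow> carrier R" using phic by auto
    next
      fix x y assume xy: "x \<in> carrier M" "y \<in> carrier M"
      have xyc: "x \<oplus>\<^bsub>M\<^esub> y \<in> carrier M" using xy by simp
      have Dc: "\<phi> (x \<oplus>\<^bsub>M\<^esub> y) \<ominus> (\<phi> x \<oplus> \<phi> y) \<in> carrier R" using phic xy xyc by simp
      have "ract M b (\<phi> (x \<oplus>\<^bsub>M\<^esub> y) \<ominus> (\<phi> x \<oplus> \<phi> y))
          = ract M b (\<phi> (x \<oplus>\<^bsub>M\<^esub> y)) \<ominus>\<^bsub>M\<^esub> (ract M b (\<phi> x) \<oplus>\<^bsub>M\<^esub> ract M b (\<phi> y))"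
        using ract_minusr[OF bM] ract_addr[OF bM] phic xy xyc by simp
      also have "\<dots> = ((\<tau> x \<ominus>\<^bsub>M\<^esub> ract M b (\<phi> x)) \<oplus>\<^bsub>M\<^esub> (\<tau> y \<ominus>\<^bsub>M\<^esub> ract M b (\<phi> y)))
           \<ominus>\<^bsub>M\<^esub> ((\<tau> x \<oplus>\<^bsub>M\<^esub> \<tau> y) \<ominus>\<^bsub>M\<^esub> ract M b (\<phi> (x \<oplus>\<^bsub>M\<^esub> y)))"
        by (rule M.agG1) (use arc phic tc xy xyc in auto)
      also have "\<dots> = ((\<tau> x \<ominus>\<^bsub>M\<^esub> ract M b (\<phi> x)) \<oplus>\<^bsub>M\<^esub> (\<tau> y \<ominus>\<^bsub>M\<^esub> ract M b (\<phi> y)))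
           \<ominus>\<^bsub>M\<^esub> (\<tau> (x \<oplus>\<^bsub>M\<^esub> y) \<ominus>\<^bsub>M\<^esub> ract M b (\<phi> (x \<oplus>\<^bsub>M\<^esub> y)))"
        using tadd xy by simp
      finally have "ract M b (\<phi> (x \<oplus>\<^bsub>M\<^esub> y) \<ominus> (\<phi> x \<oplus> \<phi> y)) \<in> ?sp"
        using span_minus[OF insert.hyps(1) BM span_add[OF insert.hyps(1) BM ev ev] ev] xy xyc by simp
      then show "\<phi> (x \<oplus>\<^bsub>M\<^esub> y) \<ominus> (\<phi> x \<oplus> \<phi> y) \<in> Ib" unfolding Ib_def using Dc by blast
    next
      fix x r assume xr: "x \<in> carrier M" "r \<in> carrier R"
      have xrc: "ract M x r \<in> carrier M" using ract_closed xr by simp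
      have Dc: "\<phi> (ract M x r) \<ominus> \<phi> x \<otimes> r \<in> carrier R" using phic xr xrc by simp
      have "ract M b (\<phi> (ract M x r) \<ominus> \<phi> x \<otimes> r)
          = ract M b (\<phi> (ract M x r)) \<ominus>\<^bsub>M\<^esub> ract M (ract M b (\<phi> x)) r"
        using ract_minusr[OF bM] ract_mult[OF bM] phic xr xrc by simp
      also have "\<dots> = (ract M (\<tau> x) r \<ominus>\<^bsub>M\<^esub> ract M (ract M b (\<phi> x)) r)
           \<ominus>\<^bsub>M\<^esub> (ract M (\<tau> x) r \<ominus>\<^bsub>M\<^esub> ract M b (\<phi> (ract M x r)))"
        by (rule M.agG2) (use arc phic tc xr xrc ract_closed in auto)
      also have "\<dots> = ract M (\<tau> x \<ominus>\<^bsub>M\<^esub> ract M b (\<phi> x)) r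
           \<ominus>\<^bsub>M\<^esub> (\<tau> (ract M x r) \<ominus>\<^bsub>M\<^esub> ract M b (\<phi> (ract M x r)))"
        using tmul xr ract_minusl tc arc phic by simp
      finally have "ract M b (\<phi> (ract M x r) \<ominus> \<phi> x \<otimes> r) \<in> ?sp"
        using span_minus[OF insert.hyps(1) BM span_ract[OF insert.hyps(1) BM ev xr(2)] ev] xr xrc by simp
      then show "\<phi> (ract M x r) \<ominus> \<phi> x \<otimes> r \<in> Ib" unfolding Ib_def using Dc by blast
    qed
    obtain u where u: "rhom R M (RR R) u" "\<forall>x\<in>carrier M. u x \<ominus> \<phi> x \<in> Ib"
      using RP[OF sa rIb lphi] by blast
    have uc: "\<And>x. x \<in> carrier M \<Longrightarrow> u x \<in> carrier R" using rhomD(1)[OF u(1)] by simp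
    have uadd: "\<And>x y. x \<in> carrier M \<Longrightarrow> y \<in> carrier M \<Longrightarrow> u (x \<oplus>\<^bsub>M\<^esub> y) = u x \<oplus> u y"
      using rhomD(2)[OF u(1)] by simp
    have umul: "\<And>x r. x \<in> carrier M \<Longrightarrow> r \<in> carrier R \<Longrightarrow> u (ract M x r) = u x \<otimes> r"
      using rhomD(3)[OF u(1)] by simp
    define \<tau>' where "\<tau>' x = \<tau> x \<ominus>\<^bsub>M\<^esub> ract M b (u x)" for x
    have tau': "rhom R M M \<tau>'" unfolding rhom_def
    proof (intro conjI ballI)
      show "\<tau>' \<in> carrier M \<rightarrow> carrier M" unfolding \<tau>'_def using tc arc uc by auto
    next
      fix x y assume xy: "x \<in> carrier M" "y \<in> carrier M"
      show "\<tau>' (x \<oplus>\<^bsub>M\<^esub> y) = \<tau>' x \<oplus>\<^bsub>M\<^esub> \<tau>' y" unfolding \<tau>'_def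
        using tadd[OF xy] uadd[OF xy] ract_addr[OF bM uc uc] xy M.agG3[OF tc tc arc arc] uc by simp
    next
      fix x r assume xr: "x \<in> carrier M" "r \<in> carrier R"
      show "\<tau>' (ract M x r) = ract M (\<tau>' x) r" unfolding \<tau>'_def
        using tmul[OF xr] umul[OF xr] ract_mult[OF bM uc xr(2)] ract_minusl[OF tc arc xr(2)] xr uc by simp
    qed
    have sp': "\<forall>x\<in>carrier M. \<tau>' x \<in> ?sp"
    proof
      fix x assume x: "x \<in> carrier M"
      have "\<tau>' x = (\<tau> x \<ominus>\<^bsub>M\<^esub> ract M b (\<phi> x)) \<oplus>\<^bsub>M\<^esub> (ract M b (\<phi> x) \<ominus>\<^bsub>M\<^esub> ract M b (u x))"
        unfolding \<tau>'_def by (rule M.agG4) (use tc arc phic uc x in auto)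
      also have "\<dots> = (\<tau> x \<ominus>\<^bsub>M\<^esub> ract M b (\<phi> x)) \<oplus>\<^bsub>M\<^esub> ract M b (\<phi> x \<ominus> u x)"
        using ract_minusr[OF bM phic uc] x by simp
      finally have e: "\<tau>' x = (\<tau> x \<ominus>\<^bsub>M\<^esub> ract M b (\<phi> x)) \<oplus>\<^bsub>M\<^esub> ract M b (\<phi> x \<ominus> u x)" .
      have "\<phi> x \<ominus> u x \<in> Ib" using cg_sym[OF uc[OF x] phic[OF x] rIb] u(2) x by blast
      then have "ract M b (\<phi> x \<ominus> u x) \<in> ?sp" unfolding Ib_def by blast
      then show "\<tau>' x \<in> ?sp" using e span_add[OF insert.hyps(1) BM ev[OF x]] by simp
    qed
    obtain s' where s': "\<forall>b\<in>B. rhom R M (RR R) (s' b)"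
      "\<forall>x\<in>carrier M. \<tau>' x = finsum M (\<lambda>b. ract M b (s' b x)) B"
      using insert.IH[OF BM] tau' sp' by blast
    define s where "s = s'(b := u)"
    have "\<forall>b'\<in>insert b B. rhom R M (RR R) (s b')" unfolding s_def using s'(1) u(1) by auto
    moreover have "\<forall>x\<in>carrier M. \<tau> x = finsum M (\<lambda>b'. ract M b' (s b' x)) (insert b B)"
    proof
      fix x assume x: "x \<in> carrier M"
      have sc: "\<And>b'. b' \<in> B \<Longrightarrow> s' b' x \<in> carrier R" using s'(1) x rhomD(1) by fastforce
      have f: "(\<lambda>b'. ract M b' (s b' x)) \<in> B \<rightarrow> carrier M"
        using sc BM ract_closed insert.hyps(2) unfolding s_def by auto
      have "finsum M (\<lambda>b'. ract M b' (s b' x)) (insert b B) = ract M b (u x) \<oplus>\<^bsub>M\<^esub> finsum M (\<lambda>b'. ract M b' (s b' x)) B"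
        using M.finsum_insert[OF insert.hyps f] arc[OF uc[OF x]] unfolding s_def by simp
      also have "finsum M (\<lambda>b'. ract M b' (s b' x)) B = finsum M (\<lambda>b'. ract M b' (s' b' x)) B"
        by (rule M.finsum_cong') (use sc BM ract_closed insert.hyps(2) in \<open>auto simp: s_def\<close>)
      also have "\<dots> = \<tau>' x" using s'(2) x by simp
      also have "ract M b (u x) \<oplus>\<^bsub>M\<^esub> \<tau>' x = \<tau> x" unfolding \<tau>'_def
        using M.agG5[OF tc[OF x] arc[OF uc[OF x]]] by simp
      finally show "\<tau> x = finsum M (\<lambda>b'. ract M b' (s b' x)) (insert b B)" by simp
    qed
    ultimately show "\<exists>s. (\<forall>b\<in>insert b B. rhom R M (RR R) (s b)) \<and>
        (\<forall>x\<in>carrier M. \<tau> x = finsum M (\<lambda>b. ract M b (s b x)) (insert b B))" by blast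
  qed
qed

end


context setting begin

lemma projective: assumes sa: "right_semiartinian R"
  shows "rprojective R M TYPE('d) TYPE('e)"
  unfolding rprojective_def
proof (intro allI impI, elim conjE)
  fix N :: "('a, 'd) module" and N' :: "('a, 'e) module" and p f
  assume N: "right_module R N" and N': "right_module R N'" and p: "rhom R N N' p"
    and ps: "p ` carrier N = carrier N'" and f: "rhom R M N' f"
  interpret M: abelian_group M by (rule M_ag)
  interpret Nm: rmodule R N by (intro rmodule.intro rring_axioms) (simp add: rmodule_axioms_def N)
  interpret NG: abelian_group N by (rule Nm.M_ag)
  obtain A where A: "finite A" "A \<subseteq> carrier M"
    and rep: "\<forall>x\<in>carrier M. \<exists>c\<in>A \<rightarrow> carrier R. x = finsum M (\<lambda>a. ract M a (c a)) A"
    using fg unfolding fin_gen_def by blast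
  have idh: "rhom R M M (\<lambda>x. x)" unfolding rhom_def using ract_closed by auto
  have idsp: "\<forall>x\<in>carrier M. x \<in> span R M A" using rep unfolding span_def by blast
  obtain s where s: "\<forall>a\<in>A. rhom R M (RR R) (s a)" "\<forall>x\<in>carrier M. x = finsum M (\<lambda>a. ract M a (s a x)) A"
    using dual[OF sa A(1) A(2)] idh idsp by blast
  have sc: "\<And>a x. a \<in> A \<Longrightarrow> x \<in> carrier M \<Longrightarrow> s a x \<in> carrier R" using s(1) rhomD(1) by fastforce
  have sadd: "\<And>a x y. a \<in> A \<Longrightarrow> x \<in> carrier M \<Longrightarrow> y \<in> carrier M \<Longrightarrow> s a (x \<oplus>\<^bsub>M\<^esub> y) = s a x \<oplus> s a y"
    using s(1) rhomD(2) by fastforce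
  have smul: "\<And>a x r. a \<in> A \<Longrightarrow> x \<in> carrier M \<Longrightarrow> r \<in> carrier R \<Longrightarrow> s a (ract M x r) = s a x \<otimes> r"
    using s(1) rhomD(3) by fastforce
  define n where "n a = (SOME m. m \<in> carrier N \<and> p m = f a)" for a
  have np: "\<And>a. a \<in> A \<Longrightarrow> n a \<in> carrier N \<and> p (n a) = f a"
  proof -
    fix a assume a: "a \<in> A"
    then have "f a \<in> carrier N'" using rhomD(1)[OF f] A(2) by blast
    then have "f a \<in> p ` carrier N" using ps by simp
    then have "\<exists>m. m \<in> carrier N \<and> p m = f a" by (auto simp: image_iff)
    then show "n a \<in> carrier N \<and> p (n a) = f a" unfolding n_def by (rule someI_ex)
  qed
  define g where "g x = finsum N (\<lambda>a. ract N (n a) (s a x)) A" for x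
  have gf: "\<And>x. x \<in> carrier M \<Longrightarrow> (\<lambda>a. ract N (n a) (s a x)) \<in> A \<rightarrow> carrier N"
    using np sc Nm.ract_closed by auto
  have "rhom R M N g" unfolding rhom_def
  proof (intro conjI ballI)
    show "g \<in> carrier M \<rightarrow> carrier N" unfolding g_def using gf NG.finsum_closed by auto
  next
    fix x y assume xy: "x \<in> carrier M" "y \<in> carrier M"
    have "g (x \<oplus>\<^bsub>M\<^esub> y) = finsum N (\<lambda>a. ract N (n a) (s a x) \<oplus>\<^bsub>N\<^esub> ract N (n a) (s a y)) A"
      unfolding g_def
    proof (rule NG.finsum_cong')
      show "(\<lambda>a. ract N (n a) (s a x) \<oplus>\<^bsub>N\<^esub> ract N (n a) (s a y)) \<in> A \<rightarrow> carrier N"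
        using gf[OF xy(1)] gf[OF xy(2)] by (auto intro!: NG.a_closed)
      fix a assume a: "a \<in> A"
      show "ract N (n a) (s a (x \<oplus>\<^bsub>M\<^esub> y)) = ract N (n a) (s a x) \<oplus>\<^bsub>N\<^esub> ract N (n a) (s a y)"
        using sadd[OF a xy] Nm.ract_addr[OF conjunct1[OF np[OF a]] sc[OF a xy(1)] sc[OF a xy(2)]] by simp
    qed simp
    also have "\<dots> = g x \<oplus>\<^bsub>N\<^esub> g y" unfolding g_def by (rule NG.finsum_addf[OF gf[OF xy(1)] gf[OF xy(2)]])
    finally show "g (x \<oplus>\<^bsub>M\<^esub> y) = g x \<oplus>\<^bsub>N\<^esub> g y" .
  next
    fix x r assume xr: "x \<in> carrier M" "r \<in> carrier R"
    have "g (ract M x r) = finsum N (\<lambda>a. ract N (ract N (n a) (s a x)) r) A"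
      unfolding g_def
    proof (rule NG.finsum_cong')
      show "(\<lambda>a. ract N (ract N (n a) (s a x)) r) \<in> A \<rightarrow> carrier N"
        using gf[OF xr(1)] Nm.ract_closed xr(2) by auto
      fix a assume a: "a \<in> A"
      show "ract N (n a) (s a (ract M x r)) = ract N (ract N (n a) (s a x)) r"
        using smul[OF a xr] Nm.ract_mult[OF conjunct1[OF np[OF a]] sc[OF a xr(1)] xr(2)] by simp
    qed simp
    also have "\<dots> = ract N (g x) r" unfolding g_def using Nm.ract_finsum[OF A(1) gf[OF xr(1)] xr(2)] by simp
    finally show "g (ract M x r) = ract N (g x) r" .
  qed
  moreover have "\<forall>x\<in>carrier M. p (g x) = f x"
  proof
    fix x assume x: "x \<in> carrier M"
    have f2: "(\<lambda>a. ract M a (s a x)) \<in> A \<rightarrow> carrier M" using A(2) sc x ract_closed by auto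
    have "p (g x) = finsum N' (\<lambda>a. p (ract N (n a) (s a x))) A"
      unfolding g_def by (rule rhom_comp_fs[OF N N' p A(1) gf[OF x]])
    also have "\<dots> = finsum N' (\<lambda>a. f (ract M a (s a x))) A"
    proof -
      interpret N'G: abelian_group N' using N' unfolding right_module_def by blast
      show ?thesis
      proof (rule N'G.finsum_cong')
        show "(\<lambda>a. f (ract M a (s a x))) \<in> A \<rightarrow> carrier N'" using f2 rhomD(1)[OF f] by auto
        fix a assume a: "a \<in> A"
        have "p (ract N (n a) (s a x)) = ract N' (p (n a)) (s a x)"
          using rhomD(3)[OF p conjunct1[OF np[OF a]] sc[OF a x]] .
        also have "\<dots> = ract N' (f a) (s a x)" using np[OF a] by simp
        also have "\<dots> = f (ract M a (s a x))" using rhomD(3)[OF f _ sc[OF a x]] a A(2) by auto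
        finally show "p (ract N (n a) (s a x)) = f (ract M a (s a x))" .
      qed simp
    qed
    also have "\<dots> = f (finsum M (\<lambda>a. ract M a (s a x)) A)"
      by (rule rhom_comp_fs[OF rmod N' f A(1) f2, symmetric])
    also have "\<dots> = f x" using s(2) x by simp
    finally show "p (g x) = f x" .
  qed
  ultimately show "\<exists>g. rhom R M N g \<and> (\<forall>x\<in>carrier M. p (g x) = f x)" by blast
qed

end

theorem corollary1p6:
  fixes R :: "'a ring" and M :: "('a, 'b) module"
  assumes "right_semiartinian R"
    and "\<not> completely_reducible R"
    and "right_module R M"
    and "fin_gen R M"
    and "weakly_projective R M"
  shows "rprojective R M TYPE('d) TYPE('e)"
proof -
  have rR: "ring R" using assms(1) unfolding right_semiartinian_def by blast
  have r1: "rring R" unfolding rring_def by (rule rR)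
  have r2: "rmodule R M" by (intro rmodule.intro r1 rmodule_axioms.intro assms(3))
  have r3: "setting R M" by (intro setting.intro r2 setting_axioms.intro assms(4) assms(5))
  show ?thesis by (rule setting.projective[OF r3 assms(1)])
qed


end
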